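(* If $\gamma\in\mathcal{M}_k\otimes\mathcal{M}_m$ is a state with $\gamma^\Gamma\ge0$ (positive under partial transpose), then $\gamma\in CR_{k,m}$.
   Context: $\mathcal{M}_k$ denotes the complex $k\times k$ matrices, and $\mathcal{M}_k\otimes\mathcal{M}_m$ is identified with $\mathcal{M}_{km}$ via the Kronecker product. A state is a positive semidefinite Hermitian matrix (not necessarily of trace one). The partial transpose of $\gamma=\sum_iA_i\otimes B_i$ is $\gamma^\Gamma=\sum_iA_i\otimes B_i^t$. For $\gamma=\sum_{i=1}^nA_i\otimes B_i\in\mathcal{M}_k\otimes\mathcal{M}_m$ define $G_\gamma:\mathcal{M}_k\to\mathcal{M}_m$, $G_\gamma(X)=\sum_i\mathrm{tr}(A_iX)B_i$, and $F_\gamma:\mathcal{M}_m\to\mathcal{M}_k$, $F_\gamma(Y)=\sum_i\mathrm{tr}(B_iY)A_i$. A linear map is positive if it maps positive semidefinite matrices to positive semidefinite matrices, and self-adjoint if self-adjoint with respect to $\langle X,Y\rangle=\mathrm{tr}(XY^* )$. For orthogonal projections $V,W$, $V\mathcal{M}_kW=\{VXW:X\in\mathcal{M}_k\}$. Given an orthogonal projection $V\in\mathcal{M}_k$ and a positive map $T:V\mathcal{M}_kV\to V\mathcal{M}_kV$, $T$ is irreducible if the only orthogonal projections $W$ with $W\mathcal{M}_kW\subseteq V\mathcal{M}_kV$ and $T(W\mathcal{M}_kW)\subseteq W\mathcal{M}_kW$ are $W=0$ and $W=V$. A self-adjoint positive map $T:\mathcal{M}_k\to\mathcal{M}_k$ is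 completely reducible if there are orthogonal projections $W_1,\dots,W_l$ with $W_iW_j=0$ for $i\ne j$, $T(W_i\mathcal{M}_kW_i)\subseteq W_i\mathcal{M}_kW_i$ and $T|_{W_i\mathcal{M}_kW_i}$ irreducible for every $i$, and $T|_R\equiv0$, where $R$ is the orthogonal complement (trace inner product) of $\bigoplus_iW_i\mathcal{M}_kW_i$ in $\mathcal{M}_k$. $CR_{k,m}$ is the set of states $\gamma\in\mathcal{M}_k\otimes\mathcal{M}_m$ such that $F_\gamma\circ G_\gamma:\mathcal{M}_k\to\mathcal{M}_k$ is completely reducible. *)

theory Defs
  imports "HOL-Analysis.Analysis"
begin

text \<open>Matrices in M_k are complex^'k^'k (the dimension k = CARD('k) is a type).
  M_k (x) M_m is identified with M_{km} via the Kronecker product; we index the rows and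
  columns of a matrix in M_k (x) M_m by pairs (i,a) with i in 'k and a in 'm, so that
  (A (x) B) at ((i,a),(j,b)) equals A_ij * B_ab.\<close>

definition kron :: "complex^('k::finite)^'k \<Rightarrow> complex^('m::finite)^'m \<Rightarrow> complex^(('k::finite)\<times>('m::finite))^('k\<times>'m)" where
  "kron A B = (\<chi> p q. A $ fst p $ fst q * B $ snd p $ snd q)"

definition adj :: "complex^('n::finite)^'n \<Rightarrow> complex^('n::finite)^'n" where
  "adj A = (\<chi> i j. cnj (A $ j $ i))"

definition hermitian :: "complex^('n::finite)^'n \<Rightarrow> bool" where
  "hermitian A \<longleftrightarrow> adj A = A"

text \<open>Positive semidefinite Hermitian matrix (a state, not necessarily of trace one).\<close>
definition psd :: "complex^('n::finite)^'n \<Rightarrow> bool" where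
  "psd A \<longleftrightarrow> hermitian A \<and>
     (\<forall>x::complex^'n::finite. 0 \<le> Re (\<Sum>i\<in>UNIV. \<Sum>j\<in>UNIV. cnj (x $ i) * A $ i $ j * x $ j))"

text \<open>Partial transpose: (sum_i A_i (x) B_i)^Gamma = sum_i A_i (x) B_i^t, i.e. entrywise
  gamma^Gamma_{(i,a),(j,b)} = gamma_{(i,b),(j,a)}.\<close>
definition ptrans :: "complex^(('k::finite)\<times>('m::finite))^('k\<times>'m) \<Rightarrow> complex^(('k::finite)\<times>('m::finite))^('k\<times>'m)" where
  "ptrans \<gamma> = (\<chi> p q. \<gamma> $ (fst p, snd q) $ (fst q, snd p))"

text \<open>G_gamma(X) = sum_n tr(A_n X) B_n, written out entrywise:
  G(X)_{ab} = sum_{i,j} gamma_{(i,a),(j,b)} X_{ji}.\<close>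
definition Gmap :: "complex^(('k::finite)\<times>('m::finite))^('k\<times>'m) \<Rightarrow> complex^('k::finite)^'k \<Rightarrow> complex^('m::finite)^'m" where
  "Gmap \<gamma> X = (\<chi> a b. \<Sum>i\<in>UNIV. \<Sum>j\<in>UNIV. \<gamma> $ (i,a) $ (j,b) * X $ j $ i)"

text \<open>F_gamma(Y) = sum_n tr(B_n Y) A_n, entrywise:
  F(Y)_{ij} = sum_{a,b} gamma_{(i,a),(j,b)} Y_{ba}.\<close>
definition Fmap :: "complex^(('k::finite)\<times>('m::finite))^('k\<times>'m) \<Rightarrow> complex^('m::finite)^'m \<Rightarrow> complex^('k::finite)^'k" where
  "Fmap \<gamma> Y = (\<chi> i j. \<Sum>a\<in>UNIV. \<Sum>b\<in>UNIV. \<gamma> $ (i,a) $ (j,b) * Y $ b $ a)"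

definition tr_inner :: "complex^('n::finite)^'n \<Rightarrow> complex^('n::finite)^'n \<Rightarrow> complex" where
  "tr_inner X Y = trace (X ** adj Y)"

definition orth_proj :: "complex^('n::finite)^'n \<Rightarrow> bool" where
  "orth_proj P \<longleftrightarrow> P ** P = P \<and> hermitian P"

definition corner :: "complex^('n::finite)^'n \<Rightarrow> complex^('n::finite)^'n \<Rightarrow> (complex^('n::finite)^'n) set" where
  "corner V W = {V ** X ** W | X. True}"

definition positive_map :: "(complex^('n::finite)^'n \<Rightarrow> complex^('n::finite)^'n) \<Rightarrow> bool" where
  "positive_map T \<longleftrightarrow> linear T \<and> (\<forall>X. psd X \<longrightarrow> psd (T X))"

definition self_adjoint_map :: "(complex^('n::finite)^'n \<Rightarrow> complex^('n::finite)^'n) \<Rightarrow> bool" where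
  "self_adjoint_map T \<longleftrightarrow> (\<forall>X Y. tr_inner (T X) Y = tr_inner X (T Y))"

definition irreducible_on :: "(complex^('n::finite)^'n \<Rightarrow> complex^('n::finite)^'n) \<Rightarrow> complex^('n::finite)^'n \<Rightarrow> bool" where
  "irreducible_on T V \<longleftrightarrow>
     (\<forall>W. orth_proj W \<and> corner W W \<subseteq> corner V V \<and> T ` corner W W \<subseteq> corner W W
          \<longrightarrow> W = 0 \<or> W = V)"

definition corner_sum :: "(complex^('n::finite)^'n) list \<Rightarrow> (complex^('n::finite)^'n) set" where
  "corner_sum Ws = {X. \<exists>Y. (\<forall>i<length Ws. Y i \<in> corner (Ws!i) (Ws!i)) \<and> X = (\<Sum>i<length Ws. Y i)}"

definition orth_compl :: "(complex^('n::finite)^'n) set \<Rightarrow> (complex^('n::finite)^'n) set" where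
  "orth_compl S = {X. \<forall>Y\<in>S. tr_inner X Y = 0}"

definition completely_reducible :: "(complex^('n::finite)^'n \<Rightarrow> complex^('n::finite)^'n) \<Rightarrow> bool" where
  "completely_reducible T \<longleftrightarrow> self_adjoint_map T \<and> positive_map T \<and>
     (\<exists>Ws. (\<forall>i<length Ws. orth_proj (Ws!i)) \<and>
           (\<forall>i<length Ws. \<forall>j<length Ws. i \<noteq> j \<longrightarrow> Ws!i ** Ws!j = 0) \<and>
           (\<forall>i<length Ws. T ` corner (Ws!i) (Ws!i) \<subseteq> corner (Ws!i) (Ws!i)) \<and>
           (\<forall>i<length Ws. irreducible_on T (Ws!i)) \<and>
           (\<forall>X\<in>orth_compl (corner_sum Ws). T X = 0))"

definition CR :: "(complex^(('k::finite)\<times>('m::finite))^('k\<times>'m)) set" where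
  "CR = {\<gamma>. psd \<gamma> \<and> completely_reducible (Fmap \<gamma> \<circ> Gmap \<gamma>)}"

end

theory Submission
  imports Defs
begin


definition qf :: "complex^('n::finite)^'n \<Rightarrow> complex^'n \<Rightarrow> complex^'n \<Rightarrow> complex" where
  "qf A x y = (\<Sum>i\<in>UNIV. cnj (x$i) * (A *v y)$i)"

lemma qf_expand: "qf A x y = (\<Sum>i\<in>UNIV. \<Sum>j\<in>UNIV. cnj (x $ i) * A $ i $ j * y $ j)"
  by (simp add: qf_def matrix_vector_mult_def sum_distrib_left mult.assoc)

lemma psd_qf: "psd A \<longleftrightarrow> hermitian A \<and> (\<forall>x. 0 \<le> Re (qf A x x))"
  by (simp add: psd_def qf_expand)

lemma qf_add_right: "qf A x (y + z) = qf A x y + qf A x z"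
  by (simp add: qf_expand algebra_simps sum.distrib)
lemma qf_add_left: "qf A (x + y) z = qf A x z + qf A y z"
  by (simp add: qf_expand algebra_simps sum.distrib)
lemma qf_scale_right: "qf A x (c *s y) = c * qf A x y"
  by (simp add: qf_expand sum_distrib_left algebra_simps)
lemma qf_scale_left: "qf A (c *s x) y = cnj c * qf A x y"
  by (simp add: qf_expand sum_distrib_left algebra_simps)
lemma qf_diff_right: "qf A x (y - z) = qf A x y - qf A x z"
  by (simp add: qf_expand algebra_simps sum_subtractf)
lemma qf_diff_left: "qf A (x - y) z = qf A x z - qf A y z"
  by (simp add: qf_expand algebra_simps sum_subtractf)
lemma qf_add_mat: "qf (A + B) x y = qf A x y + qf B x y"
  by (simp add: qf_expand algebra_simps sum.distrib)
lemma qf_diff_mat: "qf (A - B) x y = qf A x y - qf B x y"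
  by (simp add: qf_expand algebra_simps sum_subtractf)
lemma qf_zero_mat[simp]: "qf 0 x y = 0"
  by (simp add: qf_expand)
lemma qf_zero_right[simp]: "qf A x 0 = 0"
  by (simp add: qf_expand)
lemma qf_zero_left[simp]: "qf A 0 y = 0"
  by (simp add: qf_expand)

lemma herm_cnj: "hermitian A \<Longrightarrow> cnj (A $ i $ j) = A $ j $ i"
proof -
  assume "hermitian A"
  hence "adj A $ j $ i = A $ j $ i" by (simp add: hermitian_def)
  thus ?thesis by (simp add: adj_def)
qed

lemma qf_herm: "hermitian A \<Longrightarrow> qf A y x = cnj (qf A x y)"
proof -
  assume h: "hermitian A"
  have "qf A y x = (\<Sum>i\<in>UNIV. \<Sum>j\<in>UNIV. cnj (y $ i) * A $ i $ j * x $ j)"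
    by (simp add: qf_expand)
  also have "\<dots> = (\<Sum>j\<in>UNIV. \<Sum>i\<in>UNIV. cnj (y $ i) * A $ i $ j * x $ j)"
    by (rule sum.swap)
  also have "\<dots> = cnj (qf A x y)"
    by (simp add: qf_expand herm_cnj[OF h] mult_ac)
  finally show ?thesis .
qed

lemma qf_axis_left: "qf A (axis i 1) x = (A *v x) $ i"
proof -
  have "qf A (axis i 1) x = (\<Sum>j\<in>UNIV. if j = i then (A *v x) $ j else 0)"
    unfolding qf_def by (intro sum.cong refl) (simp add: axis_def)
  thus ?thesis by simp
qed

lemma qf_real: "hermitian A \<Longrightarrow> Im (qf A x x) = 0"
  using qf_herm[of A x x] by (metis cnj.sel(2) complex_cnj_cnj eq_iff_diff_eq_0 neg_equal_zero)

lemma quad_aux: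
  fixes a b :: real
  assumes "\<forall>t. 0 \<le> a * t + b * t^2" "0 \<le> b"
  shows "a = 0"
proof -
  define t where "t = -a/(b+1)"
  have "0 \<le> a * t + b * t^2" using assms(1) by blast
  moreover have "(b+1)^2 * (a * t + b * t^2) = - (a^2)"
  proof -
    have nz: "b + 1 \<noteq> 0" using assms(2) by simp
    have "(b+1)^2 * (a * t + b * t^2) = (b+1)^2 * a * t + b * ((b+1)*t)^2"
      by (simp add: algebra_simps power2_eq_square)
    also have "(b+1)*t = -a" unfolding t_def using nz by simp
    also have "(b+1)^2 * a * t = (b+1) * a * ((b+1)*t)" by (simp add: power2_eq_square)
    also have "(b+1)*t = -a" unfolding t_def using nz by simp
    finally show ?thesis by (simp add: algebra_simps power2_eq_square)
  qed
  moreover have "(b+1)^2 > 0" using assms(2) by simp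
  ultimately have "- (a^2) \<ge> 0" by (metis mult_nonneg_nonneg less_le)
  thus ?thesis by simp
qed

lemma psd_zero_vec:
  assumes "psd A" "Re (qf A x x) = 0"
  shows "A *v x = 0"
proof -
  have h: "hermitian A" and pos: "\<And>z. 0 \<le> Re (qf A z z)" using assms(1) psd_qf by auto
  have re0: "Re (qf A x y) = 0" for y
  proof -
    have "\<forall>t. 0 \<le> (2 * Re (qf A x y)) * t + Re (qf A y y) * t^2"
    proof
      fix t :: real
      have "qf A (x + (complex_of_real t) *s y) (x + (complex_of_real t) *s y)
          = qf A x x + complex_of_real t * (qf A x y + qf A y x) + (complex_of_real t)^2 * qf A y y"
        by (simp add: qf_add_left qf_add_right qf_scale_left qf_scale_right algebra_simps power2_eq_square)
      hence "Re (qf A (x + (complex_of_real t) *s y) (x + (complex_of_real t) *s y))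
          = (2 * Re (qf A x y)) * t + Re (qf A y y) * t^2"
        using assms(2) qf_herm[OF h, of y x]
        by (simp add: power2_eq_square)
      thus "0 \<le> (2 * Re (qf A x y)) * t + Re (qf A y y) * t^2" using pos by metis
    qed
    hence "2 * Re (qf A x y) = 0" using quad_aux pos by blast
    thus ?thesis by simp
  qed
  have "qf A x y = 0" for y
  proof -
    have "Re (qf A x (\<i> *s y)) = 0" by (rule re0)
    hence "Im (qf A x y) = 0" by (simp add: qf_scale_right)
    thus ?thesis using re0[of y] complex_eq_iff by auto
  qed
  hence "qf A y x = 0" for y using qf_herm[OF h, of x y] by simp
  hence "(A *v x) $ i = 0" for i using qf_axis_left by metis
  thus ?thesis by (simp add: vec_eq_iff)
qed



definition outer :: "complex^('n::finite) \<Rightarrow> complex^'n \<Rightarrow> complex^'n^'n" where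
  "outer u w = (\<chi> i j. u$i * cnj (w$j))"

definition ip :: "complex^('n::finite) \<Rightarrow> complex^'n \<Rightarrow> complex" where
  "ip x y = (\<Sum>i\<in>UNIV. cnj (x$i) * y$i)"

lemma ip_cnj: "ip y x = cnj (ip x y)"
  by (simp add: ip_def mult.commute)


lemma qf_outer: "qf (outer u w) x y = ip x u * ip w y"
  by (simp add: qf_expand outer_def ip_def sum_product mult_ac)

lemma cnj_mult_self: "cnj z * z = of_real ((cmod z)^2)"
  by (metis complex_norm_square mult.commute)

lemma qf_outer_self: "qf (outer u u) x x = of_real ((cmod (ip u x))^2)"
  by (simp add: qf_outer ip_cnj[of x u] cnj_mult_self)

lemma mat_axis: "(A *v axis j 1) $ i = A $ i $ j"
proof -
  have "(A *v axis j 1) $ i = (\<Sum>k\<in>UNIV. if k = j then A $ i $ k else 0)"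
    unfolding matrix_vector_mult_def vec_lambda_beta by (intro sum.cong refl) (simp add: axis_def)
  thus ?thesis by simp
qed

lemma qf_axis_axis: "qf A (axis i 1) (axis j 1) = A $ i $ j"
  by (simp add: qf_axis_left mat_axis)

lemma herm_entry: "hermitian A \<Longrightarrow> A $ j $ i = cnj (A $ i $ j)"
proof -
  assume "hermitian A"
  hence "adj A $ j $ i = A $ j $ i" by (simp add: hermitian_def)
  thus ?thesis by (simp add: adj_def)
qed

lemma hermitianI: "(\<And>i j. A $ j $ i = cnj (A $ i $ j)) \<Longrightarrow> hermitian A"
proof -
  assume h: "\<And>i j. A $ j $ i = cnj (A $ i $ j)"
  show ?thesis unfolding hermitian_def adj_def by (simp add: vec_eq_iff h[symmetric])
qed

lemma herm_outer: "hermitian (outer u u)"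
  by (rule hermitianI) (simp add: outer_def mult.commute)

lemma herm_diff: "hermitian A \<Longrightarrow> hermitian B \<Longrightarrow> hermitian (A - B)"
  by (rule hermitianI) (simp add: herm_cnj)

lemma herm_add: "hermitian A \<Longrightarrow> hermitian B \<Longrightarrow> hermitian (A + B)"
  by (rule hermitianI) (simp add: herm_cnj)

lemma psd_diag_zero:
  assumes "psd A" "A $ j $ j = 0"
  shows "A $ i $ j = 0" "A $ j $ i = 0"
proof -
  have "A *v axis j 1 = 0"
    using psd_zero_vec[OF assms(1)] assms(2) qf_axis_axis by (metis zero_complex.sel(1))
  hence "(A *v axis j 1) $ i = 0" by simp
  thus "A $ i $ j = 0" by (simp add: mat_axis)
  moreover have "hermitian A" using assms(1) psd_def by blast
  ultimately show "A $ j $ i = 0" using herm_cnj[of A i j] by simp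
qed

lemma psd_diag_real: "psd A \<Longrightarrow> A $ i $ i = of_real (Re (A $ i $ i)) \<and> 0 \<le> Re (A $ i $ i)"
  using qf_real[of A "axis i 1"] psd_qf[of A] qf_axis_axis[of A i i]
  by (metis complex_eq_iff of_real_0 zero_complex.simps(2) Re_complex_of_real Im_complex_of_real)

lemma psd_decomp_step:
  assumes "psd A" "A $ i $ i \<noteq> 0"
  defines "u \<equiv> (\<chi> r. A $ r $ i / of_real (sqrt (Re (A $ i $ i))))"
  shows "psd (A - outer u u)" "(A - outer u u) $ i $ i = 0"
        "\<And>j. A $ j $ j = 0 \<Longrightarrow> (A - outer u u) $ j $ j = 0"
proof -
  have h: "hermitian A" using assms(1) psd_def by blast
  define a where "a = Re (A $ i $ i)"
  have aeq: "A $ i $ i = of_real a" and a0: "0 \<le> a" using psd_diag_real[OF assms(1)] a_def by auto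
  have apos: "a > 0" using a0 aeq assms(2) by (cases "a = 0") auto
  have sq: "of_real (sqrt a) * of_real (sqrt a) = (of_real a :: complex)"
  proof -
    have "sqrt a * sqrt a = a" using a0 by simp
    moreover have "of_real (sqrt a) * of_real (sqrt a) = (of_real (sqrt a * sqrt a) :: complex)"
      by (simp only: of_real_mult)
    ultimately show ?thesis by simp
  qed
  have sqnz: "(of_real (sqrt a) :: complex) \<noteq> 0" using apos by simp
  have uu: "(outer u u) $ r $ s = A $ r $ i * A $ i $ s / of_real a" for r s
  proof -
    have "(outer u u) $ r $ s = A $ r $ i * cnj (A $ s $ i) / (of_real (sqrt a) * of_real (sqrt a))"
      by (simp add: outer_def u_def a_def[symmetric])
    also have "cnj (A $ s $ i) = A $ i $ s" using herm_cnj[OF h] by simp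
    finally show ?thesis using sq by simp
  qed
  show "(A - outer u u) $ i $ i = 0"
    using uu[of i i] aeq apos by simp
  show "(A - outer u u) $ j $ j = 0" if "A $ j $ j = 0" for j
    using uu[of j j] psd_diag_zero[OF assms(1) that] that by simp
  show "psd (A - outer u u)"
    unfolding psd_qf
  proof
    show "hermitian (A - outer u u)" using h herm_outer herm_diff by blast
    show "\<forall>x. 0 \<le> Re (qf (A - outer u u) x x)"
    proof
      fix x
      define e where "e = (axis i 1 :: complex^_)"
      define \<alpha> where "\<alpha> = qf A e x"
      have ipux: "ip u x = \<alpha> / of_real (sqrt a)"
      proof -
        have "ip u x = (\<Sum>r\<in>UNIV. A $ i $ r * x $ r) / of_real (sqrt a)"
          unfolding ip_def u_def a_def[symmetric]
          by (simp add: sum_divide_distrib herm_cnj[OF h])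
        also have "(\<Sum>r\<in>UNIV. A $ i $ r * x $ r) = \<alpha>"
          by (simp add: \<alpha>_def e_def qf_axis_left matrix_vector_mult_def)
        finally show ?thesis .
      qed
      have q1: "qf (outer u u) x x = cnj \<alpha> * \<alpha> / of_real a"
        using sq by (simp add: qf_outer ip_cnj[of x u] ipux)
      define c where "c = \<alpha> / of_real a"
      define y where "y = x - c *s e"
      have qee: "qf A e e = of_real a" using aeq by (simp add: e_def qf_axis_axis)
      have qxe: "qf A x e = cnj \<alpha>" using qf_herm[OF h, of e x] by (simp add: \<alpha>_def)
      have "qf A y y = qf A x x - c * qf A x e - cnj c * qf A e x + cnj c * c * qf A e e"
        by (simp add: y_def qf_diff_left qf_diff_right qf_scale_left qf_scale_right algebra_simps)
      also have "\<dots> = qf A x x - cnj \<alpha> * \<alpha> / of_real a"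
        using apos by (simp add: qxe qee c_def \<alpha>_def[symmetric] field_simps)
      finally have "qf (A - outer u u) x x = qf A y y"
        by (simp add: qf_diff_mat q1)
      thus "0 \<le> Re (qf (A - outer u u) x x)" using assms(1) by (simp add: psd_qf)
    qed
  qed
qed

lemma psd_decomp_aux:
  "\<forall>A. psd A \<and> card {j. A $ j $ j \<noteq> 0} = n \<longrightarrow> (\<exists>us. A = sum_list (map (\<lambda>u. outer u u) us))"
proof (induction n rule: less_induct)
  case (less n)
  show ?case
  proof (intro allI impI)
    fix A :: "complex^'a^'a"
    assume a: "psd A \<and> card {j. A $ j $ j \<noteq> 0} = n"
    show "\<exists>us. A = sum_list (map (\<lambda>u. outer u u) us)"
    proof (cases "\<exists>i. A $ i $ i \<noteq> 0")
      case False
      have "A $ r $ s = 0" for r s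
        using psd_diag_zero(1)[OF conjunct1[OF a], of s r] False by blast
      hence "A = 0" by (simp add: vec_eq_iff)
      thus ?thesis by (intro exI[of _ "[]"]) simp
    next
      case True
      then obtain i where i: "A $ i $ i \<noteq> 0" by blast
      define u where "u \<equiv> (\<chi> r. A $ r $ i / of_real (sqrt (Re (A $ i $ i)))) :: complex^'a"
      note st = psd_decomp_step[OF conjunct1[OF a] i, folded u_def]
      have sub: "{j. (A - outer u u) $ j $ j \<noteq> 0} \<subseteq> {j. A $ j $ j \<noteq> 0} - {i}"
        using st(2,3) by auto
      have "card {j. (A - outer u u) $ j $ j \<noteq> 0} < n"
      proof -
        have "card {j. (A - outer u u) $ j $ j \<noteq> 0} \<le> card ({j. A $ j $ j \<noteq> 0} - {i})"
          by (rule card_mono[OF _ sub]) simp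
        also have "\<dots> < card {j. A $ j $ j \<noteq> 0}"
          using i by (intro card_Diff1_less) auto
        finally show ?thesis using a by simp
      qed
      then obtain us where us: "A - outer u u = sum_list (map (\<lambda>u. outer u u) us)"
        using less st(1) by blast
      show ?thesis by (intro exI[of _ "u # us"]) (simp add: us[symmetric])
    qed
  qed
qed

lemma psd_decomp: "psd A \<Longrightarrow> \<exists>us. A = sum_list (map (\<lambda>u. outer u u) us)"
  using psd_decomp_aux by blast



definition tv :: "complex^('k::finite) \<Rightarrow> complex^('m::finite) \<Rightarrow> complex^('k\<times>'m)" where
  "tv v p = (\<chi> q. v $ fst q * p $ snd q)"

lemma sum_prod_UNIV: "(\<Sum>q\<in>(UNIV::('a::finite\<times>'b::finite) set). f q) = (\<Sum>i\<in>UNIV. \<Sum>a\<in>UNIV. f (i,a))"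
  by (simp add: UNIV_Times_UNIV[symmetric] sum.cartesian_product del: UNIV_Times_UNIV)

lemma qf_tv: "qf \<gamma> (tv y p) (tv x q) =
  (\<Sum>i\<in>UNIV. \<Sum>a\<in>UNIV. \<Sum>j\<in>UNIV. \<Sum>b\<in>UNIV. cnj (y$i) * cnj (p$a) * \<gamma> $ (i,a) $ (j,b) * x$j * q$b)"
  by (simp add: qf_expand sum_prod_UNIV tv_def sum_distrib_left mult_ac)

lemma qf_G_outer: "qf (Gmap \<gamma> (outer x y)) p q = qf \<gamma> (tv y p) (tv x q)"
proof -
  have "qf (Gmap \<gamma> (outer x y)) p q =
    (\<Sum>a\<in>UNIV. \<Sum>b\<in>UNIV. \<Sum>i\<in>UNIV. \<Sum>j\<in>UNIV. cnj (y$i) * cnj (p$a) * \<gamma> $ (i,a) $ (j,b) * x$j * q$b)"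
    by (simp add: qf_expand Gmap_def outer_def sum_distrib_left sum_distrib_right mult_ac)
  also have "\<dots> = (\<Sum>a\<in>UNIV. \<Sum>i\<in>UNIV. \<Sum>b\<in>UNIV. \<Sum>j\<in>UNIV. cnj (y$i) * cnj (p$a) * \<gamma> $ (i,a) $ (j,b) * x$j * q$b)"
    by (rule sum.cong[OF refl], rule sum.swap)
  also have "\<dots> = (\<Sum>i\<in>UNIV. \<Sum>a\<in>UNIV. \<Sum>b\<in>UNIV. \<Sum>j\<in>UNIV. cnj (y$i) * cnj (p$a) * \<gamma> $ (i,a) $ (j,b) * x$j * q$b)"
    by (rule sum.swap)
  also have "\<dots> = (\<Sum>i\<in>UNIV. \<Sum>a\<in>UNIV. \<Sum>j\<in>UNIV. \<Sum>b\<in>UNIV. cnj (y$i) * cnj (p$a) * \<gamma> $ (i,a) $ (j,b) * x$j * q$b)"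
    by (rule sum.cong[OF refl], rule sum.cong[OF refl], rule sum.swap)
  finally show ?thesis by (simp add: qf_tv)
qed

lemma qf_F_outer: "qf (Fmap \<gamma> (outer p p')) w v = qf \<gamma> (tv w p') (tv v p)"
proof -
  have "qf (Fmap \<gamma> (outer p p')) w v =
    (\<Sum>i\<in>UNIV. \<Sum>j\<in>UNIV. \<Sum>a\<in>UNIV. \<Sum>b\<in>UNIV. cnj (w$i) * cnj (p'$a) * \<gamma> $ (i,a) $ (j,b) * v$j * p$b)"
    by (simp add: qf_expand Fmap_def outer_def sum_distrib_left sum_distrib_right mult_ac)
  also have "\<dots> = (\<Sum>i\<in>UNIV. \<Sum>a\<in>UNIV. \<Sum>j\<in>UNIV. \<Sum>b\<in>UNIV. cnj (w$i) * cnj (p'$a) * \<gamma> $ (i,a) $ (j,b) * v$j * p$b)"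
    by (rule sum.cong[OF refl], rule sum.swap)
  finally show ?thesis by (simp add: qf_tv)
qed

lemma G_add: "Gmap \<gamma> (X + Y) = Gmap \<gamma> X + Gmap \<gamma> Y"
  by (simp add: Gmap_def vec_eq_iff algebra_simps sum.distrib)
lemma G_diff: "Gmap \<gamma> (X - Y) = Gmap \<gamma> X - Gmap \<gamma> Y"
  by (simp add: Gmap_def vec_eq_iff algebra_simps sum_subtractf)
lemma G_zero[simp]: "Gmap \<gamma> 0 = 0"
  by (simp add: Gmap_def vec_eq_iff)
lemma G_scaleR: "Gmap \<gamma> (r *\<^sub>R X) = r *\<^sub>R Gmap \<gamma> X"
  by (simp add: Gmap_def vec_eq_iff scaleR_sum_right mult_scaleR_right)
lemma F_add: "Fmap \<gamma> (X + Y) = Fmap \<gamma> X + Fmap \<gamma> Y"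
  by (simp add: Fmap_def vec_eq_iff algebra_simps sum.distrib)
lemma F_diff: "Fmap \<gamma> (X - Y) = Fmap \<gamma> X - Fmap \<gamma> Y"
  by (simp add: Fmap_def vec_eq_iff algebra_simps sum_subtractf)
lemma F_zero[simp]: "Fmap \<gamma> 0 = 0"
  by (simp add: Fmap_def vec_eq_iff)
lemma F_scaleR: "Fmap \<gamma> (r *\<^sub>R X) = r *\<^sub>R Fmap \<gamma> X"
  by (simp add: Fmap_def vec_eq_iff scaleR_sum_right mult_scaleR_right)

lemma G_sum_list: "Gmap \<gamma> (sum_list (map f xs)) = sum_list (map (\<lambda>u. Gmap \<gamma> (f u)) xs)"
  by (induction xs) (simp_all add: G_add)
lemma F_sum_list: "Fmap \<gamma> (sum_list (map f xs)) = sum_list (map (\<lambda>u. Fmap \<gamma> (f u)) xs)"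
  by (induction xs) (simp_all add: F_add)
lemma qf_sum_list: "qf (sum_list (map f xs)) x y = sum_list (map (\<lambda>u. qf (f u) x y) xs)"
  by (induction xs) (simp_all add: qf_add_mat)
lemma Re_sum_list_nonneg: "(\<And>u. u \<in> set us \<Longrightarrow> 0 \<le> Re (f u)) \<Longrightarrow> 0 \<le> Re (sum_list (map f us))"
  by (induction us) auto

lemma herm_G: "hermitian \<gamma> \<Longrightarrow> hermitian X \<Longrightarrow> hermitian (Gmap \<gamma> X)"
proof (rule hermitianI)
  fix a b
  assume h: "hermitian \<gamma>" "hermitian X"
  have "Gmap \<gamma> X $ b $ a = (\<Sum>i\<in>UNIV. \<Sum>j\<in>UNIV. \<gamma> $ (i,b) $ (j,a) * X $ j $ i)"
    by (simp add: Gmap_def)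
  also have "\<dots> = (\<Sum>j\<in>UNIV. \<Sum>i\<in>UNIV. \<gamma> $ (i,b) $ (j,a) * X $ j $ i)"
    by (rule sum.swap)
  also have "\<dots> = (\<Sum>j\<in>UNIV. \<Sum>i\<in>UNIV. cnj (\<gamma> $ (j,a) $ (i,b) * X $ i $ j))"
    by (simp add: herm_cnj[OF h(1)] herm_cnj[OF h(2)])
  also have "\<dots> = cnj (Gmap \<gamma> X $ a $ b)"
    by (simp add: Gmap_def)
  finally show "Gmap \<gamma> X $ b $ a = cnj (Gmap \<gamma> X $ a $ b)" .
qed

lemma herm_F: "hermitian \<gamma> \<Longrightarrow> hermitian Y \<Longrightarrow> hermitian (Fmap \<gamma> Y)"
proof (rule hermitianI)
  fix i j
  assume h: "hermitian \<gamma>" "hermitian Y"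
  have "Fmap \<gamma> Y $ j $ i = (\<Sum>a\<in>UNIV. \<Sum>b\<in>UNIV. \<gamma> $ (j,a) $ (i,b) * Y $ b $ a)"
    by (simp add: Fmap_def)
  also have "\<dots> = (\<Sum>b\<in>UNIV. \<Sum>a\<in>UNIV. \<gamma> $ (j,a) $ (i,b) * Y $ b $ a)"
    by (rule sum.swap)
  also have "\<dots> = (\<Sum>b\<in>UNIV. \<Sum>a\<in>UNIV. cnj (\<gamma> $ (i,b) $ (j,a) * Y $ a $ b))"
    by (simp add: herm_cnj[OF h(1)] herm_cnj[OF h(2)])
  also have "\<dots> = cnj (Fmap \<gamma> Y $ i $ j)"
    by (simp add: Fmap_def)
  finally show "Fmap \<gamma> Y $ j $ i = cnj (Fmap \<gamma> Y $ i $ j)" .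
qed

lemma qf_G_decomp: "X = sum_list (map (\<lambda>u. outer u u) us) \<Longrightarrow>
   qf (Gmap \<gamma> X) q q = sum_list (map (\<lambda>u. qf \<gamma> (tv u q) (tv u q)) us)"
  by (simp add: G_sum_list qf_sum_list qf_G_outer)

lemma qf_F_decomp: "Y = sum_list (map (\<lambda>u. outer u u) us) \<Longrightarrow>
   qf (Fmap \<gamma> Y) w w = sum_list (map (\<lambda>u. qf \<gamma> (tv w u) (tv w u)) us)"
  by (simp add: F_sum_list qf_sum_list qf_F_outer)

lemma psd_G: "psd \<gamma> \<Longrightarrow> psd X \<Longrightarrow> psd (Gmap \<gamma> X)"
proof -
  assume a: "psd \<gamma>" "psd X"
  obtain us where us: "X = sum_list (map (\<lambda>u. outer u u) us)" using psd_decomp[OF a(2)] by blast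
  show ?thesis unfolding psd_qf
  proof (intro conjI allI)
    have "hermitian \<gamma>" "hermitian X" using a by (simp_all add: psd_def)
    thus "hermitian (Gmap \<gamma> X)" by (rule herm_G)
    fix q show "0 \<le> Re (qf (Gmap \<gamma> X) q q)"
      unfolding qf_G_decomp[OF us] using a(1) psd_qf by (intro Re_sum_list_nonneg) blast
  qed
qed

lemma psd_F: "psd \<gamma> \<Longrightarrow> psd Y \<Longrightarrow> psd (Fmap \<gamma> Y)"
proof -
  assume a: "psd \<gamma>" "psd Y"
  obtain us where us: "Y = sum_list (map (\<lambda>u. outer u u) us)" using psd_decomp[OF a(2)] by blast
  show ?thesis unfolding psd_qf
  proof (intro conjI allI)
    have "hermitian \<gamma>" "hermitian Y" using a by (simp_all add: psd_def)
    thus "hermitian (Fmap \<gamma> Y)" by (rule herm_F)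
    fix q show "0 \<le> Re (qf (Fmap \<gamma> Y) q q)"
      unfolding qf_F_decomp[OF us] using a(1) psd_qf by (intro Re_sum_list_nonneg) blast
  qed
qed

lemma tr_inner_expand: "tr_inner A B = (\<Sum>i\<in>UNIV. \<Sum>j\<in>UNIV. A $ i $ j * cnj (B $ i $ j))"
  by (simp add: tr_inner_def trace_def matrix_matrix_mult_def adj_def)

lemma tr_inner_cnj: "tr_inner B A = cnj (tr_inner A B)"
  by (simp add: tr_inner_expand mult.commute)

lemma GF_adjoint:
  assumes h: "hermitian \<gamma>"
  shows "tr_inner (Gmap \<gamma> X) Y = tr_inner X (Fmap \<gamma> Y)"
proof -
  have "tr_inner (Gmap \<gamma> X) Y =
     (\<Sum>a\<in>UNIV. \<Sum>b\<in>UNIV. \<Sum>i\<in>UNIV. \<Sum>j\<in>UNIV. \<gamma> $ (i,a) $ (j,b) * X $ j $ i * cnj (Y $ a $ b))"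
    by (simp add: tr_inner_expand Gmap_def sum_distrib_right)
  also have "\<dots> = (\<Sum>a\<in>UNIV. \<Sum>i\<in>UNIV. \<Sum>b\<in>UNIV. \<Sum>j\<in>UNIV. \<gamma> $ (i,a) $ (j,b) * X $ j $ i * cnj (Y $ a $ b))"
    by (rule sum.cong[OF refl], rule sum.swap)
  also have "\<dots> = (\<Sum>i\<in>UNIV. \<Sum>a\<in>UNIV. \<Sum>b\<in>UNIV. \<Sum>j\<in>UNIV. \<gamma> $ (i,a) $ (j,b) * X $ j $ i * cnj (Y $ a $ b))"
    by (rule sum.swap)
  also have "\<dots> = (\<Sum>i\<in>UNIV. \<Sum>a\<in>UNIV. \<Sum>j\<in>UNIV. \<Sum>b\<in>UNIV. \<gamma> $ (i,a) $ (j,b) * X $ j $ i * cnj (Y $ a $ b))"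
    by (rule sum.cong[OF refl], rule sum.cong[OF refl], rule sum.swap)
  also have "\<dots> = (\<Sum>i\<in>UNIV. \<Sum>j\<in>UNIV. \<Sum>a\<in>UNIV. \<Sum>b\<in>UNIV. \<gamma> $ (i,a) $ (j,b) * X $ j $ i * cnj (Y $ a $ b))"
    by (rule sum.cong[OF refl], rule sum.swap)
  also have "\<dots> = (\<Sum>j\<in>UNIV. \<Sum>i\<in>UNIV. \<Sum>a\<in>UNIV. \<Sum>b\<in>UNIV. \<gamma> $ (i,a) $ (j,b) * X $ j $ i * cnj (Y $ a $ b))"
    by (rule sum.swap)
  also have "\<dots> = (\<Sum>j\<in>UNIV. \<Sum>i\<in>UNIV. \<Sum>b\<in>UNIV. \<Sum>a\<in>UNIV. \<gamma> $ (i,a) $ (j,b) * X $ j $ i * cnj (Y $ a $ b))"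
    by (rule sum.cong[OF refl], rule sum.cong[OF refl], rule sum.swap)
  also have "\<dots> = tr_inner X (Fmap \<gamma> Y)"
    by (simp add: tr_inner_expand Fmap_def sum_distrib_left herm_cnj[OF h] mult_ac)
  finally show ?thesis .
qed



lemma qf_ip: "qf A x y = ip x (A *v y)"
  by (simp add: qf_def ip_def)

lemma ip_add_right: "ip x (y + z) = ip x y + ip x z"
  by (simp add: ip_def algebra_simps sum.distrib)
lemma ip_add_left: "ip (x + y) z = ip x z + ip y z"
  by (simp add: ip_def algebra_simps sum.distrib)
lemma ip_diff_right: "ip x (y - z) = ip x y - ip x z"
  by (simp add: ip_def algebra_simps sum_subtractf)
lemma ip_diff_left: "ip (x - y) z = ip x z - ip y z"
  by (simp add: ip_def algebra_simps sum_subtractf)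
lemma ip_scale_right: "ip x (c *s y) = c * ip x y"
  by (simp add: ip_def sum_distrib_left algebra_simps)
lemma ip_scale_left: "ip (c *s x) y = cnj c * ip x y"
  by (simp add: ip_def sum_distrib_left algebra_simps)
lemma ip_zero_right[simp]: "ip x 0 = 0" by (simp add: ip_def)
lemma ip_zero_left[simp]: "ip 0 x = 0" by (simp add: ip_def)

lemma ip_self_Re: "Re (ip x x) = (\<Sum>i\<in>UNIV. (cmod (x$i))^2)"
  by (simp add: ip_def cnj_mult_self)

lemma ip_self_Re_nonneg: "0 \<le> Re (ip x x)"
  by (simp add: ip_self_Re sum_nonneg)

lemma ip_self_zero: "Re (ip x x) = 0 \<Longrightarrow> x = 0"
proof -
  assume "Re (ip x x) = 0"
  hence "(\<Sum>i\<in>UNIV. (cmod (x$i))^2) = 0" by (simp add: ip_self_Re)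
  hence "\<forall>i\<in>UNIV. (cmod (x$i))^2 = 0" by (subst (asm) sum_nonneg_eq_0_iff) auto
  thus "x = 0" by (simp add: vec_eq_iff)
qed

lemma ip_adj: "ip x (A *v y) = ip (adj A *v x) y"
proof -
  have "ip x (A *v y) = (\<Sum>i\<in>UNIV. \<Sum>j\<in>UNIV. cnj (x$i) * A$i$j * y$j)"
    by (simp add: ip_def matrix_vector_mult_def sum_distrib_left mult.assoc)
  also have "\<dots> = (\<Sum>j\<in>UNIV. \<Sum>i\<in>UNIV. cnj (x$i) * A$i$j * y$j)"
    by (rule sum.swap)
  also have "\<dots> = ip (adj A *v x) y"
    by (simp add: ip_def adj_def matrix_vector_mult_def sum_distrib_left sum_distrib_right mult_ac)
  finally show ?thesis .
qed

lemma mv_add: "(A::complex^'n::finite^'m::finite) *v (x + y) = A *v x + A *v y"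
  by (simp add: matrix_vector_mult_def vec_eq_iff algebra_simps sum.distrib)
lemma mv_diff: "(A::complex^'n::finite^'m::finite) *v (x - y) = A *v x - A *v y"
  by (simp add: matrix_vector_mult_def vec_eq_iff right_diff_distrib sum_subtractf)
lemma mv_scale: "(A::complex^'n::finite^'m::finite) *v (c *s x) = c *s (A *v x)"
  by (simp add: matrix_vector_mult_def vec_eq_iff sum_distrib_left mult.left_commute)
lemma mv_zero[simp]: "A *v 0 = (0::complex^_)"
  by (simp add: matrix_vector_mult_def vec_eq_iff)

lemma tv_add_left: "tv (v + w) p = tv v p + tv w p"
  by (simp add: tv_def vec_eq_iff algebra_simps)
lemma tv_add_right: "tv v (p + q) = tv v p + tv v q"
  by (simp add: tv_def vec_eq_iff algebra_simps)
lemma tv_scale_left: "tv (c *s v) p = c *s tv v p"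
  by (simp add: tv_def vec_eq_iff algebra_simps)
lemma tv_scale_right: "tv v (c *s p) = c *s tv v p"
  by (simp add: tv_def vec_eq_iff algebra_simps)
lemma tv_zero_left[simp]: "tv 0 p = 0"
  by (simp add: tv_def vec_eq_iff)
lemma tv_zero_right[simp]: "tv v 0 = 0"
  by (simp add: tv_def vec_eq_iff)

lemma psd_orth_proj: "orth_proj V \<Longrightarrow> psd V"
proof -
  assume a: "orth_proj V"
  hence h: "hermitian V" and vv: "V ** V = V" by (auto simp: orth_proj_def)
  show ?thesis unfolding psd_qf
  proof (intro conjI allI h)
    fix x
    have "qf V x x = ip x (V *v (V *v x))" by (simp add: qf_ip matrix_vector_mul_assoc vv)
    also have "\<dots> = ip (V *v x) (V *v x)" using h by (simp add: ip_adj hermitian_def)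
    finally show "0 \<le> Re (qf V x x)" using ip_self_Re_nonneg by simp
  qed
qed

lemma sum_list_Re_zero:
  "(\<And>u. u \<in> set us \<Longrightarrow> 0 \<le> Re (f u)) \<Longrightarrow> Re (sum_list (map f us)) = 0 \<Longrightarrow> u \<in> set us \<Longrightarrow> Re (f u) = 0"
proof (induction us)
  case Nil thus ?case by simp
next
  case (Cons a us)
  have "0 \<le> Re (sum_list (map f us))" using Cons.prems(1) by (intro Re_sum_list_nonneg) auto
  moreover have "0 \<le> Re (f a)" using Cons.prems(1) by auto
  moreover have "Re (f a) + Re (sum_list (map f us)) = 0" using Cons.prems(2) by simp
  ultimately have "Re (f a) = 0" "Re (sum_list (map f us)) = 0" by linarith+
  thus ?case using Cons by auto
qed

lemma outer_mv: "outer x x *v v = ip x v *s x"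
  by (simp add: outer_def matrix_vector_mult_def ip_def vec_eq_iff sum_distrib_left mult_ac)

lemma sum_list_outer_mv: "sum_list (map (\<lambda>u. outer u u) xs) *v v = sum_list (map (\<lambda>u. ip u v *s u) xs)"
proof (induction xs)
  case Nil thus ?case by (simp add: matrix_vector_mult_def vec_eq_iff)
next
  case (Cons a xs)
  have "(outer a a + sum_list (map (\<lambda>u. outer u u) xs)) *v v = outer a a *v v + sum_list (map (\<lambda>u. outer u u) xs) *v v"
    by (simp add: matrix_vector_mult_def vec_eq_iff algebra_simps sum.distrib)
  thus ?case using Cons by (simp add: outer_mv)
qed

definition cnjv :: "complex^('n::finite) \<Rightarrow> complex^'n" where
  "cnjv z = (\<chi> a. cnj (z $ a))"

lemma qf_ptrans_tv: "qf (ptrans \<gamma>) (tv w (cnjv q)) (tv v (cnjv p)) = qf \<gamma> (tv w p) (tv v q)"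
proof -
  have "qf (ptrans \<gamma>) (tv w (cnjv q)) (tv v (cnjv p)) =
    (\<Sum>i\<in>UNIV. \<Sum>a\<in>UNIV. \<Sum>j\<in>UNIV. \<Sum>b\<in>UNIV. cnj (w$i) * q$a * \<gamma> $ (i,b) $ (j,a) * v$j * cnj (p$b))"
    by (simp add: qf_tv ptrans_def cnjv_def)
  also have "\<dots> = (\<Sum>i\<in>UNIV. \<Sum>a\<in>UNIV. \<Sum>b\<in>UNIV. \<Sum>j\<in>UNIV. cnj (w$i) * q$a * \<gamma> $ (i,b) $ (j,a) * v$j * cnj (p$b))"
    by (rule sum.cong[OF refl], rule sum.cong[OF refl], rule sum.swap)
  also have "\<dots> = (\<Sum>i\<in>UNIV. \<Sum>b\<in>UNIV. \<Sum>a\<in>UNIV. \<Sum>j\<in>UNIV. cnj (w$i) * q$a * \<gamma> $ (i,b) $ (j,a) * v$j * cnj (p$b))"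
    by (rule sum.cong[OF refl], rule sum.swap)
  also have "\<dots> = (\<Sum>i\<in>UNIV. \<Sum>b\<in>UNIV. \<Sum>j\<in>UNIV. \<Sum>a\<in>UNIV. cnj (w$i) * q$a * \<gamma> $ (i,b) $ (j,a) * v$j * cnj (p$b))"
    by (rule sum.cong[OF refl], rule sum.cong[OF refl], rule sum.swap)
  also have "\<dots> = qf \<gamma> (tv w p) (tv v q)"
    by (simp add: qf_tv mult_ac)
  finally show ?thesis .
qed

definition csub :: "(complex^('n::finite)) set \<Rightarrow> bool" where
  "csub S \<longleftrightarrow> 0 \<in> S \<and> (\<forall>a b. a \<in> S \<longrightarrow> b \<in> S \<longrightarrow> a + b \<in> S) \<and> (\<forall>c a. a \<in> S \<longrightarrow> c *s a \<in> S)"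

definition inspan :: "(complex^('n::finite)) list \<Rightarrow> complex^'n \<Rightarrow> bool" where
  "inspan L y \<longleftrightarrow> (\<forall>S. csub S \<and> set L \<subseteq> S \<longrightarrow> y \<in> S)"

lemma csub_diff: "csub S \<Longrightarrow> a \<in> S \<Longrightarrow> b \<in> S \<Longrightarrow> a - b \<in> S"
proof -
  assume "csub S" "a \<in> S" "b \<in> S"
  hence "a + (-1) *s b \<in> S" unfolding csub_def by blast
  moreover have "a + (-1) *s b = a - b" by (simp add: vec_eq_iff)
  ultimately show ?thesis by simp
qed

lemma csub_orth: "(\<And>p. p \<in> set L \<Longrightarrow> ip p z = 0) \<Longrightarrow> csub {y. ip y z = 0} \<and> set L \<subseteq> {y. ip y z = 0}"
  by (auto simp: csub_def ip_add_left ip_scale_left)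

lemma orth_decomp: "\<exists>y. inspan L y \<and> (\<forall>p\<in>set L. ip p (x - y) = 0)"
proof (induction L arbitrary: x)
  case Nil
  show ?case by (intro exI[of _ 0]) (simp add: inspan_def csub_def)
next
  case (Cons u L)
  obtain y1 where y1: "inspan L y1" "\<forall>p\<in>set L. ip p (x - y1) = 0" using Cons.IH by blast
  obtain yu where yu: "inspan L yu" "\<forall>p\<in>set L. ip p (u - yu) = 0" using Cons.IH by blast
  define z where "z = x - y1"
  define zu where "zu = u - yu"
  have mono: "inspan L y \<Longrightarrow> inspan (u # L) y" for y by (auto simp: inspan_def)
  have orthL: "(\<forall>p\<in>set L. ip p z' = 0) \<Longrightarrow> inspan L y \<Longrightarrow> ip y z' = 0" for z' y
    using csub_orth[of L z'] unfolding inspan_def by blast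
  show ?case
  proof (cases "Re (ip zu zu) = 0")
    case True
    hence "zu = 0" by (rule ip_self_zero)
    hence "u = yu" by (simp add: zu_def)
    hence "ip u z = 0" using orthL[of z yu] y1(2) yu(1) by (simp add: z_def)
    thus ?thesis using y1 mono by (intro exI[of _ y1]) (auto simp: z_def)
  next
    case False
    define d where "d = ip zu zu"
    have dnz: "d \<noteq> 0" using False d_def by auto
    define c where "c = ip zu z / d"
    define y where "y = y1 + c *s zu"
    have xy: "x - y = z - c *s zu" by (simp add: y_def z_def algebra_simps)
    have oL: "\<forall>p\<in>set L. ip p (x - y) = 0"
      using y1(2) yu(2) by (simp add: xy ip_diff_right ip_scale_right z_def zu_def)
    have ozu: "ip zu (x - y) = 0"
      using dnz by (simp add: xy ip_diff_right ip_scale_right c_def d_def)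
    have oyu: "ip yu (x - y) = 0" using orthL[OF oL yu(1)] .
    have ou: "ip u (x - y) = 0"
    proof -
      have "u = yu + zu" by (simp add: zu_def)
      thus ?thesis using ozu oyu by (simp add: ip_add_left)
    qed
    have "inspan (u # L) y"
      unfolding inspan_def
    proof (intro allI impI)
      fix S assume S: "csub S \<and> set (u # L) \<subseteq> S"
      have "y1 \<in> S" "yu \<in> S" using y1(1) yu(1) S unfolding inspan_def by auto
      moreover have "u \<in> S" using S by auto
      ultimately have "zu \<in> S" using csub_diff S zu_def by blast
      hence "c *s zu \<in> S" using S unfolding csub_def by blast
      thus "y \<in> S" using \<open>y1 \<in> S\<close> S unfolding csub_def y_def by blast
    qed
    thus ?thesis using oL ou by (intro exI[of _ y]) auto
  qed
qed



lemma mv_sum_list_tv: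
  assumes "\<And>u. u \<in> set xs \<Longrightarrow> \<gamma> *v tv u z = 0"
  shows "\<gamma> *v tv (sum_list (map (\<lambda>u. c u *s u) xs)) z = 0"
  using assms
proof (induction xs)
  case Nil thus ?case by simp
next
  case (Cons a xs)
  have "\<gamma> *v tv (c a *s a + sum_list (map (\<lambda>u. c u *s u) xs)) z
      = c a *s (\<gamma> *v tv a z) + \<gamma> *v tv (sum_list (map (\<lambda>u. c u *s u) xs)) z"
    by (simp only: tv_add_left mv_add tv_scale_left mv_scale)
  thus ?case using Cons by (simp add: vec_eq_iff)
qed

lemma claimA:
  fixes \<gamma> :: "complex^('k::finite\<times>'m::finite)^('k\<times>'m)"
  assumes g: "psd \<gamma>" and pt: "psd (ptrans \<gamma>)" and V: "orth_proj V"
    and inv: "Fmap \<gamma> (Gmap \<gamma> V) \<in> corner V V"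
    and v: "V *v v = v" and w: "V *v w = 0"
  shows "qf \<gamma> (tv w p) (tv v q) = 0"
proof -
  have hg: "hermitian \<gamma>" using g psd_def by blast
  have pV: "psd V" using psd_orth_proj[OF V] .
  obtain xs where xs: "V = sum_list (map (\<lambda>u. outer u u) xs)" using psd_decomp[OF pV] by blast
  obtain ps where ps: "Gmap \<gamma> V = sum_list (map (\<lambda>u. outer u u) ps)"
    using psd_decomp[OF psd_G[OF g pV]] by blast
  obtain U where U: "Fmap \<gamma> (Gmap \<gamma> V) = V ** U ** V" using inv unfolding corner_def by blast
  have gnn: "\<And>x. 0 \<le> Re (qf \<gamma> x x)" using g psd_qf by blast
  have mfact: "\<gamma> *v tv w' p' = 0" if w': "V *v w' = 0" and p': "p' \<in> set ps" for w' p'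
  proof -
    have "qf (Fmap \<gamma> (Gmap \<gamma> V)) w' w' = ip w' (V *v (U *v (V *v w')))"
      by (simp add: qf_ip U matrix_vector_mul_assoc[symmetric])
    also have "\<dots> = 0" using w' by simp
    finally have "sum_list (map (\<lambda>u. qf \<gamma> (tv w' u) (tv w' u)) ps) = 0"
      using qf_F_decomp[OF ps, of \<gamma> w'] by simp
    hence "Re (qf \<gamma> (tv w' p') (tv w' p')) = 0"
      using sum_list_Re_zero[of ps "\<lambda>u. qf \<gamma> (tv w' u) (tv w' u)" p'] gnn p' by simp
    thus ?thesis using psd_zero_vec[OF g] by blast
  qed
  have nfact: "\<gamma> *v tv v' z = 0" if z: "\<forall>p'\<in>set ps. ip p' z = 0" and v': "V *v v' = v'" for z v'
  proof -
    have "qf (Gmap \<gamma> V) z z = sum_list (map (\<lambda>u. qf (outer u u) z z) ps)"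
      by (simp add: ps qf_sum_list)
    also have "\<dots> = sum_list (map (\<lambda>u. 0) ps)"
      by (intro arg_cong[where f=sum_list] map_cong refl) (simp add: qf_outer z)
    finally have "sum_list (map (\<lambda>u. qf \<gamma> (tv u z) (tv u z)) xs) = 0"
      using qf_G_decomp[OF xs, of \<gamma> z] by simp
    hence x0: "\<gamma> *v tv x z = 0" if "x \<in> set xs" for x
      using sum_list_Re_zero[of xs "\<lambda>u. qf \<gamma> (tv u z) (tv u z)" x] gnn that psd_zero_vec[OF g] by simp
    have "v' = sum_list (map (\<lambda>u. ip u v' *s u) xs)"
      using v' sum_list_outer_mv[of xs v'] xs by simp
    hence "tv v' z = tv (sum_list (map (\<lambda>u. ip u v' *s u) xs)) z" by simp
    thus ?thesis using mv_sum_list_tv[of xs \<gamma> z "\<lambda>u. ip u v'"] x0 by simp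
  qed
  define Mset where "Mset = {y. \<forall>w'. V *v w' = 0 \<longrightarrow> \<gamma> *v tv w' y = 0}"
  have cM: "csub Mset"
    unfolding csub_def Mset_def
    by (auto simp: tv_add_right mv_add tv_scale_right mv_scale)
  have psM: "set ps \<subseteq> Mset" using mfact unfolding Mset_def by blast
  obtain y where y: "inspan ps y" "\<forall>p'\<in>set ps. ip p' (p - y) = 0" using orth_decomp by blast
  have yM: "y \<in> Mset" using y(1) cM psM unfolding inspan_def by blast
  define z where "z = p - y"
  have pyz: "p = y + z" by (simp add: z_def)
  have t1: "qf \<gamma> (tv w y) (tv v q) = 0"
  proof -
    have "\<gamma> *v tv w y = 0" using yM w unfolding Mset_def by blast
    hence "qf \<gamma> (tv v q) (tv w y) = 0" by (simp add: qf_ip)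
    thus ?thesis using qf_herm[OF hg, of "tv v q" "tv w y"] by simp
  qed
  have t2: "qf \<gamma> (tv w z) (tv v q) = 0"
  proof -
    have n0: "\<gamma> *v tv v z = 0" using nfact[of z v] y(2) v by (simp add: z_def)
    have "Re (qf (ptrans \<gamma>) (tv v (cnjv z)) (tv v (cnjv z))) = 0"
      using qf_ptrans_tv[of \<gamma> v z v z] n0 by (simp add: qf_ip)
    hence "ptrans \<gamma> *v tv v (cnjv z) = 0" using psd_zero_vec[OF pt] by blast
    hence "qf (ptrans \<gamma>) (tv w (cnjv q)) (tv v (cnjv z)) = 0" by (simp add: qf_ip)
    thus ?thesis using qf_ptrans_tv[of \<gamma> w q v z] by simp
  qed
  show ?thesis using t1 t2 by (simp add: pyz tv_add_right qf_add_left)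
qed



lemma mm_add_left: "((A::complex^'n::finite^'m::finite) + B) ** C = A ** C + B ** C"
  by (simp add: matrix_matrix_mult_def vec_eq_iff distrib_right sum.distrib)
lemma mm_add_right: "(A::complex^'n::finite^'m::finite) ** (B + C) = A ** B + A ** C"
  by (simp add: matrix_matrix_mult_def vec_eq_iff distrib_left sum.distrib)
lemma mm_diff_left: "((A::complex^'n::finite^'m::finite) - B) ** C = A ** C - B ** C"
  by (simp add: matrix_matrix_mult_def vec_eq_iff left_diff_distrib sum_subtractf)
lemma mm_diff_right: "(A::complex^'n::finite^'m::finite) ** (B - C) = A ** B - A ** C"
  by (simp add: matrix_matrix_mult_def vec_eq_iff right_diff_distrib sum_subtractf)

lemma proj_compl:
  assumes "orth_proj (V::complex^'n::finite^'n)"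
  shows "V ** (mat 1 - V) = 0" "(mat 1 - V) ** V = 0" "(mat 1 - V) ** (mat 1 - V) = mat 1 - V"
    "V ** V = V" "hermitian (mat 1 - V)" "orth_proj (mat 1 - V)" "V + (mat 1 - V) = mat 1"
proof -
  have vv: "V ** V = V" and h: "hermitian V" using assms by (auto simp: orth_proj_def)
  show "V ** V = V" by (rule vv)
  show 1: "V ** (mat 1 - V) = 0" by (simp add: mm_diff_right vv)
  show "(mat 1 - V) ** V = 0" by (simp add: mm_diff_left vv)
  show 2: "(mat 1 - V) ** (mat 1 - V) = mat 1 - V" by (simp add: mm_diff_left mm_diff_right vv)
  have "hermitian (mat 1 :: complex^'n^'n)"
    by (rule hermitianI) (simp add: mat_def)
  thus 3: "hermitian (mat 1 - V)" using h herm_diff by blast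
  show "orth_proj (mat 1 - V)" using 2 3 by (simp add: orth_proj_def)
  show "V + (mat 1 - V) = mat 1" by simp
qed

lemma mv_column: "A *v (\<chi> j. B $ j $ c) = (\<chi> j. (A ** B) $ j $ c)"
  by (simp add: matrix_vector_mult_def matrix_matrix_mult_def)

lemma G_lin:
  assumes "\<And>j i. Z $ j $ i = (\<Sum>c\<in>UNIV. f c * M c $ j $ i)"
  shows "Gmap \<gamma> Z $ a $ b = (\<Sum>c\<in>UNIV. f c * Gmap \<gamma> (M c) $ a $ b)"
proof -
  have "Gmap \<gamma> Z $ a $ b = (\<Sum>i\<in>UNIV. \<Sum>j\<in>UNIV. \<Sum>c\<in>UNIV. f c * (\<gamma> $ (i,a) $ (j,b) * M c $ j $ i))"
    by (simp add: Gmap_def assms sum_distrib_left mult_ac)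
  also have "\<dots> = (\<Sum>i\<in>UNIV. \<Sum>c\<in>UNIV. \<Sum>j\<in>UNIV. f c * (\<gamma> $ (i,a) $ (j,b) * M c $ j $ i))"
    by (rule sum.cong[OF refl], rule sum.swap)
  also have "\<dots> = (\<Sum>c\<in>UNIV. \<Sum>i\<in>UNIV. \<Sum>j\<in>UNIV. f c * (\<gamma> $ (i,a) $ (j,b) * M c $ j $ i))"
    by (rule sum.swap)
  also have "\<dots> = (\<Sum>c\<in>UNIV. f c * Gmap \<gamma> (M c) $ a $ b)"
    by (simp add: Gmap_def sum_distrib_left)
  finally show ?thesis .
qed

lemma triple_entry:
  assumes "hermitian C"
  shows "(A ** X ** C) $ j $ i = (\<Sum>cd\<in>UNIV. X $ fst cd $ snd cd * outer (\<chi> j. A $ j $ fst cd) (\<chi> i. C $ i $ snd cd) $ j $ i)"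
proof -
  have "(A ** X ** C) $ j $ i = (\<Sum>d\<in>UNIV. \<Sum>c\<in>UNIV. A $ j $ c * X $ c $ d * C $ d $ i)"
    by (simp add: matrix_matrix_mult_def sum_distrib_right)
  also have "\<dots> = (\<Sum>c\<in>UNIV. \<Sum>d\<in>UNIV. A $ j $ c * X $ c $ d * C $ d $ i)"
    by (rule sum.swap)
  also have "\<dots> = (\<Sum>cd\<in>UNIV. X $ fst cd $ snd cd * outer (\<chi> j. A $ j $ fst cd) (\<chi> i. C $ i $ snd cd) $ j $ i)"
    by (simp add: sum_prod_UNIV outer_def herm_cnj[OF assms] mult_ac)
  finally show ?thesis .
qed

lemma G_offdiag:
  fixes \<gamma> :: "complex^('k::finite\<times>'m::finite)^('k\<times>'m)"
  assumes g: "psd \<gamma>" and pt: "psd (ptrans \<gamma>)" and V: "orth_proj V"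
    and inv: "Fmap \<gamma> (Gmap \<gamma> V) \<in> corner V V"
  shows "Gmap \<gamma> (V ** X ** (mat 1 - V)) = 0" "Gmap \<gamma> ((mat 1 - V) ** X ** V) = 0"
proof -
  note pc = proj_compl[OF V]
  have hV: "hermitian V" using V orth_proj_def by blast
  have colV: "V *v (\<chi> j. V $ j $ c) = (\<chi> j. V $ j $ c)" for c by (simp add: mv_column pc(4))
  have colP: "V *v (\<chi> j. (mat 1 - V) $ j $ c) = 0" for c by (subst mv_column, simp add: pc(1) vec_eq_iff)
  have o1: "Gmap \<gamma> (outer (\<chi> j. V $ j $ c) (\<chi> i. (mat 1 - V) $ i $ d)) = 0" for c d
  proof -
    have "Gmap \<gamma> (outer (\<chi> j. V $ j $ c) (\<chi> i. (mat 1 - V) $ i $ d)) $ a $ b = 0" for a b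
      using qf_G_outer[of \<gamma> "\<chi> j. V $ j $ c" "\<chi> i. (mat 1 - V) $ i $ d" "axis a 1" "axis b 1"]
        claimA[OF g pt V inv colV colP] by (simp add: qf_axis_axis)
    thus ?thesis by (simp add: vec_eq_iff)
  qed
  have o2: "Gmap \<gamma> (outer (\<chi> j. (mat 1 - V) $ j $ c) (\<chi> i. V $ i $ d)) = 0" for c d
  proof -
    have "Gmap \<gamma> (outer (\<chi> j. (mat 1 - V) $ j $ c) (\<chi> i. V $ i $ d)) $ a $ b = 0" for a b
    proof -
      have hg: "hermitian \<gamma>" using g psd_def by blast
      have "qf \<gamma> (tv (\<chi> j. (mat 1 - V) $ j $ c) (axis b 1)) (tv (\<chi> i. V $ i $ d) (axis a 1)) = 0"
        by (rule claimA[OF g pt V inv colV colP])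
      hence "qf \<gamma> (tv (\<chi> i. V $ i $ d) (axis a 1)) (tv (\<chi> j. (mat 1 - V) $ j $ c) (axis b 1)) = 0"
        using qf_herm[OF hg] by (metis complex_cnj_zero)
      thus ?thesis
        using qf_G_outer[of \<gamma> "\<chi> j. (mat 1 - V) $ j $ c" "\<chi> i. V $ i $ d" "axis a 1" "axis b 1"]
        by (simp add: qf_axis_axis)
    qed
    thus ?thesis by (simp add: vec_eq_iff)
  qed
  have "Gmap \<gamma> (V ** X ** (mat 1 - V)) $ a $ b = 0" for a b
  proof -
    have "Gmap \<gamma> (V ** X ** (mat 1 - V)) $ a $ b = (\<Sum>cd\<in>UNIV. X $ fst cd $ snd cd *
       Gmap \<gamma> (outer (\<chi> j. V $ j $ fst cd) (\<chi> i. (mat 1 - V) $ i $ snd cd)) $ a $ b)"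
      by (rule G_lin[OF triple_entry[OF pc(5)]])
    also have "\<dots> = 0" by (simp only: o1) simp
    finally show ?thesis .
  qed
  thus "Gmap \<gamma> (V ** X ** (mat 1 - V)) = 0" by (simp add: vec_eq_iff)
  have "Gmap \<gamma> ((mat 1 - V) ** X ** V) $ a $ b = 0" for a b
  proof -
    have "Gmap \<gamma> ((mat 1 - V) ** X ** V) $ a $ b = (\<Sum>cd\<in>UNIV. X $ fst cd $ snd cd *
       Gmap \<gamma> (outer (\<chi> j. (mat 1 - V) $ j $ fst cd) (\<chi> i. V $ i $ snd cd)) $ a $ b)"
      by (rule G_lin[OF triple_entry[OF hV]])
    also have "\<dots> = 0" by (simp only: o2) simp
    finally show ?thesis .
  qed
  thus "Gmap \<gamma> ((mat 1 - V) ** X ** V) = 0" by (simp add: vec_eq_iff)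
qed

lemma G_split:
  fixes \<gamma> :: "complex^('k::finite\<times>'m::finite)^('k\<times>'m)"
  assumes g: "psd \<gamma>" and pt: "psd (ptrans \<gamma>)" and V: "orth_proj V"
    and inv: "Fmap \<gamma> (Gmap \<gamma> V) \<in> corner V V"
  shows "Gmap \<gamma> X = Gmap \<gamma> (V ** X ** V) + Gmap \<gamma> ((mat 1 - V) ** X ** (mat 1 - V))"
proof -
  note pc = proj_compl[OF V]
  define P where "P = mat 1 - V"
  have "X = (V + P) ** X ** (V + P)" using pc(7) by (simp add: P_def)
  also have "\<dots> = V ** X ** V + V ** X ** P + (P ** X ** V + P ** X ** P)"
    by (simp add: mm_add_left mm_add_right)
  finally have "Gmap \<gamma> X = Gmap \<gamma> (V ** X ** V) + Gmap \<gamma> (V ** X ** P) + (Gmap \<gamma> (P ** X ** V) + Gmap \<gamma> (P ** X ** P))"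
    by (metis G_add)
  thus ?thesis using G_offdiag[OF g pt V inv] by (simp add: P_def)
qed

lemma T_split:
  fixes \<gamma> :: "complex^('k::finite\<times>'m::finite)^('k\<times>'m)"
  assumes g: "psd \<gamma>" and pt: "psd (ptrans \<gamma>)" and V: "orth_proj V"
    and inv: "Fmap \<gamma> (Gmap \<gamma> V) \<in> corner V V"
  shows "Fmap \<gamma> (Gmap \<gamma> X) = Fmap \<gamma> (Gmap \<gamma> (V ** X ** V)) + Fmap \<gamma> (Gmap \<gamma> ((mat 1 - V) ** X ** (mat 1 - V)))"
  by (subst G_split[OF g pt V inv]) (simp add: F_add)



abbreviation Tm :: "complex^('k::finite\<times>'m::finite)^('k\<times>'m) \<Rightarrow> complex^'k^'k \<Rightarrow> complex^'k^'k" where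
  "Tm \<gamma> \<equiv> Fmap \<gamma> \<circ> Gmap \<gamma>"

lemma adj_mult: "adj ((A::complex^'n::finite^'n) ** B) = adj B ** adj A"
  by (simp add: adj_def matrix_matrix_mult_def vec_eq_iff mult.commute)
lemma adj_adj[simp]: "adj (adj A) = A"
  by (simp add: adj_def vec_eq_iff)
lemma adj_herm: "hermitian A \<Longrightarrow> adj A = A"
  by (simp add: hermitian_def)

lemma corner_iff: "orth_proj V \<Longrightarrow> Y \<in> corner V V \<longleftrightarrow> V ** Y ** V = Y"
proof
  assume V: "orth_proj V" and "Y \<in> corner V V"
  then obtain X where X: "Y = V ** X ** V" unfolding corner_def by blast
  have vv: "V ** V = V" using V orth_proj_def by blast
  have "V ** Y ** V = (V ** V) ** X ** (V ** V)" by (simp add: X matrix_mul_assoc)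
  thus "V ** Y ** V = Y" by (simp add: vv X)
next
  assume "V ** Y ** V = Y"
  thus "Y \<in> corner V V" unfolding corner_def by (metis (mono_tags, lifting) mem_Collect_eq)
qed

lemma proj_in_corner: assumes "orth_proj V" shows "V \<in> corner V V"
proof -
  have vv: "V ** V = V" using assms orth_proj_def by blast
  have "V ** V ** V = V" by (simp add: vv)
  thus ?thesis using corner_iff[OF assms] by blast
qed

lemma le_adj:
  assumes "hermitian A" "hermitian W" "W ** A = A"
  shows "A ** W = A"
proof -
  have "adj (W ** A) = adj A" using assms(3) by simp
  thus ?thesis by (simp add: adj_mult adj_herm assms(1,2))
qed

lemma tr_zero:
  assumes "\<And>E. trace ((B::complex^'n::finite^'n) ** E) = 0"
  shows "B = 0"
proof -
  have "B $ i $ j = 0" for i j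
  proof -
    define E :: "complex^'n^'n" where "E = (\<chi> r s. if r = j \<and> s = i then (1::complex) else 0)"
    have "trace (B ** E) = (\<Sum>r\<in>UNIV. \<Sum>s\<in>UNIV. B $ r $ s * E $ s $ r)"
      by (simp add: trace_def matrix_matrix_mult_def)
    also have "\<dots> = (\<Sum>r\<in>UNIV. if r = i then B $ r $ j else 0)"
    proof (rule sum.cong[OF refl])
      fix r
      have "(\<Sum>s\<in>UNIV. B $ r $ s * E $ s $ r) = (\<Sum>s\<in>UNIV. if s = j then (if r = i then B $ r $ j else 0) else 0)"
        by (rule sum.cong[OF refl]) (simp add: E_def)
      also have "\<dots> = (if r = i then B $ r $ j else 0)" by simp
      finally show "(\<Sum>s\<in>UNIV. B $ r $ s * E $ s $ r) = (if r = i then B $ r $ j else 0)" .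
    qed
    also have "\<dots> = B $ i $ j" by simp
    finally show ?thesis using assms by simp
  qed
  thus ?thesis by (simp add: vec_eq_iff)
qed

lemma tr_inner_trace: "tr_inner X Y = trace (X ** adj Y)"
  by (simp add: tr_inner_def)

lemma T_selfadj:
  assumes "hermitian \<gamma>"
  shows "tr_inner (Tm \<gamma> X) Y = tr_inner X (Tm \<gamma> Y)"
proof -
  have "tr_inner (Tm \<gamma> X) Y = cnj (tr_inner Y (Fmap \<gamma> (Gmap \<gamma> X)))" using tr_inner_cnj[of "Fmap \<gamma> (Gmap \<gamma> X)" Y] by simp
  also have "\<dots> = cnj (tr_inner (Gmap \<gamma> Y) (Gmap \<gamma> X))" by (simp add: GF_adjoint[OF assms])
  also have "\<dots> = tr_inner (Gmap \<gamma> X) (Gmap \<gamma> Y)" using tr_inner_cnj[of "Gmap \<gamma> X" "Gmap \<gamma> Y"] by simp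
  also have "\<dots> = tr_inner X (Tm \<gamma> Y)" by (simp add: GF_adjoint[OF assms])
  finally show ?thesis .
qed

lemma corner_subspace: "subspace (corner (V::complex^'n::finite^'n) V)"
  unfolding subspace_def corner_def
proof (intro conjI allI impI ballI)
  show "0 \<in> {V ** X ** V |X. True}" by (rule CollectI, rule exI[of _ 0]) simp
  fix x y assume "x \<in> {V ** X ** V |X. True}" "y \<in> {V ** X ** V |X. True}"
  then obtain X Y where "x = V ** X ** V" "y = V ** Y ** V" by blast
  thus "x + y \<in> {V ** X ** V |X. True}"
    by (intro CollectI exI[of _ "X + Y"]) (simp add: mm_add_left mm_add_right)
next
  fix c :: real and x assume "x \<in> {V ** X ** V |X. True}"
  then obtain X where "x = V ** X ** V" by blast
  thus "c *\<^sub>R x \<in> {V ** X ** V |X. True}"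
    by (intro CollectI exI[of _ "c *\<^sub>R X"]) (simp add: scalar_matrix_assoc matrix_scalar_ac)
qed

lemma dim_corner_less:
  assumes V: "orth_proj V" and W: "orth_proj W" and le: "V ** W = W" and ne: "W \<noteq> V"
  shows "dim (corner W W) < dim (corner V V)"
proof -
  have sub: "corner W W \<subseteq> corner V V"
  proof
    fix Y assume "Y \<in> corner W W"
    then obtain X where X: "Y = W ** X ** W" unfolding corner_def by blast
    have hW: "hermitian W" and hV: "hermitian V" using V W orth_proj_def by auto
    have wv: "W ** V = W" using le_adj[OF hW hV le] .
    have "V ** Y ** V = (V ** W) ** X ** (W ** V)" by (simp add: X matrix_mul_assoc)
    thus "Y \<in> corner V V" using le wv X corner_iff[OF V] by simp
  qed
  have nin: "V \<notin> corner W W"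
  proof
    assume "V \<in> corner W W"
    hence "W ** V ** W = V" using corner_iff[OF W] by simp
    hence "W ** V = V" using W unfolding orth_proj_def by (metis matrix_mul_assoc)
    moreover have "W ** V = W" using le_adj le V W orth_proj_def by blast
    ultimately show False using ne by simp
  qed
  have "span (corner W W) \<subset> span (corner V V)"
    using sub nin proj_in_corner[OF V] by (auto simp: span_eq_iff[THEN iffD2, OF corner_subspace])
  thus ?thesis by (rule dim_psubset)
qed



definition invar :: "complex^('k::finite\<times>'m::finite)^('k\<times>'m) \<Rightarrow> complex^'k^'k \<Rightarrow> bool" where
  "invar \<gamma> V \<longleftrightarrow> Tm \<gamma> ` corner V V \<subseteq> corner V V"

lemma invar_point: "orth_proj V \<Longrightarrow> invar \<gamma> V \<Longrightarrow> Fmap \<gamma> (Gmap \<gamma> V) \<in> corner V V"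
  using proj_in_corner unfolding invar_def by fastforce

lemma Tm_zero[simp]: "Tm \<gamma> 0 = 0" by simp

lemma lassoc0: "(A::complex^'n::finite^'n) ** B = 0 \<Longrightarrow> X ** A ** B = 0"
  by (simp add: matrix_mul_assoc[symmetric])
lemma lassoc_id: "(A::complex^'n::finite^'n) ** B = C \<Longrightarrow> X ** A ** B = X ** C"
  by (simp add: matrix_mul_assoc[symmetric])

lemma T_left_right:
  fixes \<gamma> :: "complex^('k::finite\<times>'m::finite)^('k\<times>'m)"
  assumes g: "psd \<gamma>" and pt: "psd (ptrans \<gamma>)" and W: "orth_proj W" and iv: "invar \<gamma> W"
  shows "Tm \<gamma> (W ** A) = Tm \<gamma> (W ** A ** W)" "Tm \<gamma> (A ** W) = Tm \<gamma> (W ** A ** W)"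
proof -
  note pc = proj_compl[OF W]
  note sp = T_split[OF g pt W invar_point[OF W iv]]
  have a1: "W ** (W ** A) ** W = W ** A ** W" by (simp add: matrix_mul_assoc pc(4))
  have a2: "(mat 1 - W) ** (W ** A) ** (mat 1 - W) = 0" by (simp add: matrix_mul_assoc pc(2))
  show "Tm \<gamma> (W ** A) = Tm \<gamma> (W ** A ** W)" using sp[of "W ** A"] by (simp add: a1 a2)
  have b1: "W ** (A ** W) ** W = W ** A ** W" by (simp add: matrix_mul_assoc lassoc_id[OF pc(4)])
  have b2: "(mat 1 - W) ** (A ** W) ** (mat 1 - W) = 0" by (simp add: matrix_mul_assoc lassoc0[OF pc(1)])
  show "Tm \<gamma> (A ** W) = Tm \<gamma> (W ** A ** W)" using sp[of "A ** W"] by (simp add: b1 b2)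
qed

lemma orth_corner_trace:
  assumes W: "orth_proj W" and Y: "Y \<in> corner (mat 1 - W) (mat 1 - W)" and R: "R \<in> corner W W"
  shows "tr_inner Y R = 0"
proof -
  note pc = proj_compl[OF W]
  obtain Z where Z: "Y = (mat 1 - W) ** Z ** (mat 1 - W)" using Y unfolding corner_def by blast
  obtain U where U: "R = W ** U ** W" using R unfolding corner_def by blast
  have hW: "adj W = W" using W adj_herm orth_proj_def by blast
  have "Y ** adj R = (mat 1 - W) ** Z ** (mat 1 - W) ** W ** adj U ** W"
    by (simp add: Z U adj_mult hW matrix_mul_assoc)
  also have "\<dots> = 0" by (simp add: lassoc0[OF pc(2)])
  finally show ?thesis by (simp add: tr_inner_trace trace_def)
qed

lemma invar_compl:
  fixes \<gamma> :: "complex^('k::finite\<times>'m::finite)^('k\<times>'m)"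
  assumes g: "psd \<gamma>" and pt: "psd (ptrans \<gamma>)" and W: "orth_proj W" and iv: "invar \<gamma> W"
  shows "invar \<gamma> (mat 1 - W)"
  unfolding invar_def
proof
  fix R assume "R \<in> Tm \<gamma> ` corner (mat 1 - W) (mat 1 - W)"
  then obtain Y where Y: "Y \<in> corner (mat 1 - W) (mat 1 - W)" and R: "R = Tm \<gamma> Y" by blast
  note pc = proj_compl[OF W]
  have hg: "hermitian \<gamma>" using g psd_def by blast
  have hW: "adj W = W" using W adj_herm orth_proj_def by blast
  note lr = T_left_right[OF g pt W iv]
  have incW: "Tm \<gamma> (W ** A ** W) \<in> corner W W" for A
  proof -
    have "W ** A ** W \<in> corner W W" unfolding corner_def by blast
    thus ?thesis using iv unfolding invar_def by blast
  qed
  have WR: "W ** R = 0"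
  proof (rule tr_zero)
    fix E
    have "trace (W ** R ** E) = trace ((R ** E) ** W)"
      using trace_mul_sym[of W "R ** E"] by (simp add: matrix_mul_assoc)
    also have "\<dots> = tr_inner R (adj (E ** W))" by (simp add: tr_inner_trace matrix_mul_assoc)
    also have "\<dots> = tr_inner Y (Tm \<gamma> (adj (E ** W)))" using T_selfadj[OF hg] R by simp
    also have "Tm \<gamma> (adj (E ** W)) = Tm \<gamma> (W ** adj E ** W)"
    proof -
      have "adj (E ** W) = W ** adj E" by (simp add: adj_mult hW)
      thus ?thesis using lr(1)[of "adj E"] by (simp only:)
    qed
    also have "tr_inner Y (Tm \<gamma> (W ** adj E ** W)) = 0" by (rule orth_corner_trace[OF W Y incW])
    finally show "trace (W ** R ** E) = 0" .
  qed
  have RW: "R ** W = 0"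
  proof (rule tr_zero)
    fix E
    have "trace (R ** W ** E) = tr_inner R (adj (W ** E))" by (simp add: tr_inner_trace matrix_mul_assoc)
    also have "\<dots> = tr_inner Y (Tm \<gamma> (adj (W ** E)))" using T_selfadj[OF hg] R by simp
    also have "Tm \<gamma> (adj (W ** E)) = Tm \<gamma> (W ** adj E ** W)"
    proof -
      have "adj (W ** E) = adj E ** W" by (simp add: adj_mult hW)
      thus ?thesis using lr(2)[of "adj E"] by (simp only:)
    qed
    also have "tr_inner Y (Tm \<gamma> (W ** adj E ** W)) = 0" by (rule orth_corner_trace[OF W Y incW])
    finally show "trace (R ** W ** E) = 0" .
  qed
  have "(mat 1 - W) ** R ** (mat 1 - W) = R"
    by (simp add: mm_diff_left mm_diff_right WR RW matrix_mul_assoc[symmetric])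
  thus "R \<in> corner (mat 1 - W) (mat 1 - W)" using corner_iff[OF pc(6)] by blast
qed



lemma invar_diff:
  fixes \<gamma> :: "complex^('k::finite\<times>'m::finite)^('k\<times>'m)"
  assumes g: "psd \<gamma>" and pt: "psd (ptrans \<gamma>)" and V: "orth_proj V" and iV: "invar \<gamma> V"
    and W: "orth_proj W" and iW: "invar \<gamma> W" and le: "V ** W = W"
  shows "orth_proj (V - W)" "invar \<gamma> (V - W)" "V ** (V - W) = V - W"
proof -
  have hV: "hermitian V" and vv: "V ** V = V" using V orth_proj_def by auto
  have hW: "hermitian W" and ww: "W ** W = W" using W orth_proj_def by auto
  have wv: "W ** V = W" using le_adj[OF hW hV le] .
  have dd: "(V - W) ** (V - W) = V - W"
    by (simp add: mm_diff_left mm_diff_right vv ww wv le)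
  show op: "orth_proj (V - W)" using dd herm_diff[OF hV hW] by (simp add: orth_proj_def)
  show "V ** (V - W) = V - W" by (simp add: mm_diff_right vv le)
  define P where "P = mat 1 - W"
  have iP: "invar \<gamma> P" unfolding P_def by (rule invar_compl[OF g pt W iW])
  have oP: "orth_proj P" unfolding P_def using proj_compl[OF W] by blast
  have pv: "P ** V = V - W" by (simp add: P_def mm_diff_left wv)
  have vp: "V ** P = V - W" by (simp add: P_def mm_diff_right le)
  show "invar \<gamma> (V - W)"
    unfolding invar_def
  proof
    fix R assume "R \<in> Tm \<gamma> ` corner (V - W) (V - W)"
    then obtain Y where Y: "Y \<in> corner (V - W) (V - W)" and R: "R = Tm \<gamma> Y" by blast
    obtain Z where Z: "Y = (V - W) ** Z ** (V - W)" using Y unfolding corner_def by blast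
    have vd: "V ** (V - W) = V - W" by (simp add: mm_diff_right vv le)
    have dv: "(V - W) ** V = V - W" by (simp add: mm_diff_left vv wv)
    have pd: "P ** (V - W) = V - W" by (simp add: P_def mm_diff_left mm_diff_right ww wv)
    have dp: "(V - W) ** P = V - W" by (simp add: P_def mm_diff_left mm_diff_right ww le)
    have "V ** Y ** V = (V ** (V - W)) ** Z ** ((V - W) ** V)" by (simp add: Z matrix_mul_assoc)
    hence "V ** Y ** V = Y" by (simp add: vd dv Z)
    hence "Y \<in> corner V V" using corner_iff[OF V] by blast
    hence RV: "R \<in> corner V V" using iV R unfolding invar_def by blast
    have "P ** Y ** P = (P ** (V - W)) ** Z ** ((V - W) ** P)" by (simp add: Z matrix_mul_assoc)
    hence "P ** Y ** P = Y" by (simp add: pd dp Z)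
    hence "Y \<in> corner P P" using corner_iff[OF oP] by blast
    hence RP: "R \<in> corner P P" using iP R unfolding invar_def by blast
    have "(V - W) ** R ** (V - W) = (P ** V) ** R ** (V ** P)" by (simp only: pv vp)
    also have "\<dots> = P ** (V ** R ** V) ** P" by (simp add: matrix_mul_assoc)
    also have "\<dots> = R" using RV RP corner_iff[OF V] corner_iff[OF oP] by simp
    finally show "R \<in> corner (V - W) (V - W)" using corner_iff[OF op] by blast
  qed
qed

definition orthrel :: "complex^('n::finite)^'n \<Rightarrow> complex^'n^'n \<Rightarrow> bool" where
  "orthrel A B \<longleftrightarrow> A ** B = 0 \<and> B ** A = 0"

lemma decomp:
  fixes \<gamma> :: "complex^('k::finite\<times>'m::finite)^('k\<times>'m)"
  assumes g: "psd \<gamma>" and pt: "psd (ptrans \<gamma>)"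
  shows "orth_proj V \<Longrightarrow> invar \<gamma> V \<Longrightarrow> \<exists>Ws. (\<forall>W\<in>set Ws. orth_proj W \<and> invar \<gamma> W \<and> irreducible_on (Tm \<gamma>) W \<and> V ** W = W)
      \<and> sorted_wrt orthrel Ws \<and> sum_list Ws = V"
proof (induction "dim (corner V V)" arbitrary: V rule: less_induct)
  case less
  have V: "orth_proj V" and iV: "invar \<gamma> V" by fact+
  have hV: "hermitian V" and vv: "V ** V = V" using V orth_proj_def by auto
  show ?case
  proof (cases "irreducible_on (Tm \<gamma>) V")
    case True
    thus ?thesis using V iV vv by (intro exI[of _ "[V]"]) simp
  next
    case False
    then obtain W where W: "orth_proj W" and sub: "corner W W \<subseteq> corner V V"
      and iW': "Tm \<gamma> ` corner W W \<subseteq> corner W W" and nz: "W \<noteq> 0" and ne: "W \<noteq> V"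
      unfolding irreducible_on_def by blast
    have iW: "invar \<gamma> W" using iW' invar_def by blast
    have hW: "hermitian W" and ww: "W ** W = W" using W orth_proj_def by auto
    have "W \<in> corner V V" using sub proj_in_corner[OF W] by blast
    hence vwv: "V ** W ** V = W" using corner_iff[OF V] by blast
    have le: "V ** W = W"
    proof -
      have "V ** W = V ** (V ** W ** V)" by (simp add: vwv)
      also have "\<dots> = (V ** V) ** W ** V" by (simp add: matrix_mul_assoc)
      finally show ?thesis by (simp add: vv vwv)
    qed
    have wv: "W ** V = W" using le_adj[OF hW hV le] .
    note df = invar_diff[OF g pt V iV W iW le]
    define U where "U = V - W"
    have U: "orth_proj U" "invar \<gamma> U" "V ** U = U" using df by (simp_all add: U_def)
    have hU: "hermitian U" using U orth_proj_def by blast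
    have "U \<noteq> V" using nz by (simp add: U_def)
    have d1: "dim (corner W W) < dim (corner V V)" by (rule dim_corner_less[OF V W le ne])
    have d2: "dim (corner U U) < dim (corner V V)" by (rule dim_corner_less[OF V U(1) U(3) \<open>U \<noteq> V\<close>])
    obtain Ws1 where Ws1: "\<forall>A\<in>set Ws1. orth_proj A \<and> invar \<gamma> A \<and> irreducible_on (Tm \<gamma>) A \<and> W ** A = A"
      "sorted_wrt orthrel Ws1" "sum_list Ws1 = W" using less(1)[OF d1 W iW] by blast
    obtain Ws2 where Ws2: "\<forall>A\<in>set Ws2. orth_proj A \<and> invar \<gamma> A \<and> irreducible_on (Tm \<gamma>) A \<and> U ** A = A"
      "sorted_wrt orthrel Ws2" "sum_list Ws2 = U" using less(1)[OF d2 U(1,2)] by blast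
    have wu: "W ** U = 0" by (simp add: U_def mm_diff_right wv ww)
    have uw: "U ** W = 0" by (simp add: U_def mm_diff_left le ww)
    have cross: "orthrel A B" if A: "A \<in> set Ws1" and B: "B \<in> set Ws2" for A B
    proof -
      have hA: "hermitian A" "W ** A = A" using Ws1(1) A orth_proj_def by auto
      have hB: "hermitian B" "U ** B = B" using Ws2(1) B orth_proj_def by auto
      have aw: "A ** W = A" using le_adj[OF hA(1) hW hA(2)] .
      have bu: "B ** U = B" using le_adj[OF hB(1) hU hB(2)] .
      have "A ** B = A ** (W ** U) ** B"
        by (simp add: matrix_mul_assoc aw) (simp add: matrix_mul_assoc[symmetric] hB(2))
      hence 1: "A ** B = 0" by (simp add: wu)
      have "B ** A = B ** (U ** W) ** A"
        by (simp add: matrix_mul_assoc bu) (simp add: matrix_mul_assoc[symmetric] hA(2))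
      hence 2: "B ** A = 0" by (simp add: uw)
      show ?thesis using 1 2 by (simp add: orthrel_def)
    qed
    have sub1: "V ** A = A" if "A \<in> set Ws1" for A
    proof -
      have "W ** A = A" using Ws1(1) that by blast
      hence "V ** A = (V ** W) ** A" by (simp add: matrix_mul_assoc[symmetric])
      thus ?thesis using le \<open>W ** A = A\<close> by simp
    qed
    have sub2: "V ** A = A" if "A \<in> set Ws2" for A
    proof -
      have "U ** A = A" using Ws2(1) that by blast
      hence "V ** A = (V ** U) ** A" by (simp add: matrix_mul_assoc[symmetric])
      thus ?thesis using U(3) \<open>U ** A = A\<close> by simp
    qed
    show ?thesis
    proof (intro exI[of _ "Ws1 @ Ws2"] conjI)
      show "\<forall>A\<in>set (Ws1 @ Ws2). orth_proj A \<and> invar \<gamma> A \<and> irreducible_on (Tm \<gamma>) A \<and> V ** A = A"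
        using Ws1(1) Ws2(1) sub1 sub2 by auto
      show "sorted_wrt orthrel (Ws1 @ Ws2)"
        using Ws1(2) Ws2(2) cross by (simp add: sorted_wrt_append)
      show "sum_list (Ws1 @ Ws2) = V" using Ws1(3) Ws2(3) by (simp add: U_def)
    qed
  qed
qed

lemma mult_sum_list_zero:
  "(\<And>B. B \<in> set Bs \<Longrightarrow> (A::complex^'n::finite^'n) ** B = 0) \<Longrightarrow> A ** sum_list Bs = 0"
  by (induction Bs) (simp_all add: mm_add_right)
lemma sum_list_mult_zero:
  "(\<And>B. B \<in> set Bs \<Longrightarrow> B ** (A::complex^'n::finite^'n) = 0) \<Longrightarrow> sum_list Bs ** A = 0"
  by (induction Bs) (simp_all add: mm_add_left)

lemma T_sum:
  fixes \<gamma> :: "complex^('k::finite\<times>'m::finite)^('k\<times>'m)"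
  assumes g: "psd \<gamma>" and pt: "psd (ptrans \<gamma>)"
  shows "(\<forall>W\<in>set Ws. orth_proj W \<and> invar \<gamma> W) \<Longrightarrow> sorted_wrt orthrel Ws \<Longrightarrow>
    Tm \<gamma> (sum_list Ws ** X ** sum_list Ws) = sum_list (map (\<lambda>W. Tm \<gamma> (W ** X ** W)) Ws)"
proof (induction Ws)
  case Nil thus ?case by simp
next
  case (Cons W Ws)
  have W: "orth_proj W" and iW: "invar \<gamma> W" using Cons.prems by auto
  have ww: "W ** W = W" using W orth_proj_def by blast
  define U where "U = sum_list Ws"
  have orr: "\<And>B. B \<in> set Ws \<Longrightarrow> W ** B = 0 \<and> B ** W = 0" using Cons.prems(2) by (simp add: orthrel_def)
  have wu: "W ** U = 0" unfolding U_def by (rule mult_sum_list_zero) (simp add: orr)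
  have uw: "U ** W = 0" unfolding U_def by (rule sum_list_mult_zero) (simp add: orr)
  define S where "S = W + U"
  have ws: "W ** S = W" by (simp add: S_def mm_add_right ww wu)
  have sw: "S ** W = W" by (simp add: S_def mm_add_left ww uw)
  have ps: "(mat 1 - W) ** S = U" by (simp add: mm_diff_left ws) (simp add: S_def)
  have sp: "S ** (mat 1 - W) = U" by (simp add: mm_diff_right sw) (simp add: S_def)
  have e1: "W ** (S ** X ** S) ** W = W ** X ** W"
  proof -
    have "W ** (S ** X ** S) ** W = (W ** S) ** X ** (S ** W)" by (simp add: matrix_mul_assoc)
    thus ?thesis by (simp add: ws sw)
  qed
  have e2: "(mat 1 - W) ** (S ** X ** S) ** (mat 1 - W) = U ** X ** U"
  proof -
    have "(mat 1 - W) ** (S ** X ** S) ** (mat 1 - W) = ((mat 1 - W) ** S) ** X ** (S ** (mat 1 - W))"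
      by (simp add: matrix_mul_assoc)
    thus ?thesis by (simp add: ps sp)
  qed
  have "Tm \<gamma> (S ** X ** S) = Tm \<gamma> (W ** X ** W) + Tm \<gamma> (U ** X ** U)"
    using T_split[OF g pt W invar_point[OF W iW], of "S ** X ** S"] by (simp add: e1 e2)
  moreover have "Tm \<gamma> (U ** X ** U) = sum_list (map (\<lambda>W. Tm \<gamma> (W ** X ** W)) Ws)"
    using Cons by (simp add: U_def)
  ultimately show ?case by (simp add: S_def U_def)
qed



lemma orth_proj_id: "orth_proj (mat 1 :: complex^'n::finite^'n)"
proof -
  have "hermitian (mat 1 :: complex^'n^'n)" by (rule hermitianI) (simp add: mat_def)
  thus ?thesis by (simp add: orth_proj_def)
qed

lemma corner_id: "corner (mat 1 :: complex^'n::finite^'n) (mat 1) = UNIV"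
  unfolding corner_def by auto

lemma kill_corner:
  assumes W: "orth_proj W" and orth: "\<And>A. tr_inner X (W ** A ** W) = 0"
  shows "W ** X ** W = 0"
proof (rule tr_zero)
  fix E
  have hW: "adj W = W" using W adj_herm orth_proj_def by blast
  have "trace (W ** X ** W ** E) = trace (X ** (W ** E ** W))"
    using trace_mul_sym[of W "X ** W ** E"] by (simp add: matrix_mul_assoc)
  also have "\<dots> = tr_inner X (adj (W ** E ** W))" by (simp add: tr_inner_trace)
  also have "adj (W ** E ** W) = W ** adj E ** W" by (simp add: adj_mult hW matrix_mul_assoc)
  finally show "trace (W ** X ** W ** E) = 0" using orth by simp
qed

theorem mainTheorem6:
  fixes \<gamma> :: "complex^('k::finite\<times>'m::finite)^('k\<times>'m)"
  assumes "psd \<gamma>" and "psd (ptrans \<gamma>)"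
  shows "\<gamma> \<in> CR"
proof -
  note g = assms(1) and pt = assms(2)
  have hg: "hermitian \<gamma>" using g psd_def by blast
  have iI: "invar \<gamma> (mat 1)" unfolding invar_def corner_id by simp
  obtain Ws where Ws: "\<forall>W\<in>set Ws. orth_proj W \<and> invar \<gamma> W \<and> irreducible_on (Tm \<gamma>) W \<and> mat 1 ** W = W"
    "sorted_wrt orthrel Ws" "sum_list Ws = mat 1"
    using decomp[OF g pt orth_proj_id iI] by blast
  have sa: "self_adjoint_map (Tm \<gamma>)"
    unfolding self_adjoint_map_def using T_selfadj[OF hg] by blast
  have lin: "linear (Tm \<gamma>)"
    by (rule linearI) (simp_all add: G_add F_add G_scaleR F_scaleR)
  have pos: "positive_map (Tm \<gamma>)"
    unfolding positive_map_def using lin psd_F[OF g] psd_G[OF g] by simp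
  have nth: "Ws ! i \<in> set Ws" if "i < length Ws" for i using that by simp
  have pw: "Ws ! i ** Ws ! j = 0" if "i < length Ws" "j < length Ws" "i \<noteq> j" for i j
  proof (cases "i < j")
    case True
    thus ?thesis using Ws(2) that by (simp add: sorted_wrt_iff_nth_less orthrel_def)
  next
    case False
    hence "j < i" using that by simp
    thus ?thesis using Ws(2) that by (simp add: sorted_wrt_iff_nth_less orthrel_def)
  qed
  have kill: "Tm \<gamma> X = 0" if X: "X \<in> orth_compl (corner_sum Ws)" for X
  proof -
    have z: "W ** X ** W = 0" if W: "W \<in> set Ws" for W
    proof -
      obtain i where i: "i < length Ws" "Ws ! i = W" using W by (meson in_set_conv_nth)
      have oW: "orth_proj W" using Ws(1) W by blast
      show ?thesis
      proof (rule kill_corner[OF oW])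
        fix A
        define Y where "Y = (\<lambda>j. if j = i then W ** A ** W else (0::complex^'k^'k))"
        have "W ** A ** W \<in> corner_sum Ws"
          unfolding corner_sum_def
        proof (intro CollectI exI[of _ Y] conjI allI impI)
          fix j assume "j < length Ws"
          show "Y j \<in> corner (Ws ! j) (Ws ! j)"
          proof (cases "j = i")
            case True thus ?thesis by (simp add: Y_def corner_def i(2)) blast
          next
            case False
            have "Ws ! j ** 0 ** Ws ! j = (0::complex^'k^'k)" by simp
            hence "\<exists>X. Ws ! j ** X ** Ws ! j = (0::complex^'k^'k)" by blast
            thus ?thesis using False unfolding Y_def corner_def by simp
          qed
        next
          show "W ** A ** W = (\<Sum>j<length Ws. Y j)" using i(1) by (simp add: Y_def)
        qed
        thus "tr_inner X (W ** A ** W) = 0" using X unfolding orth_compl_def by blast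
      qed
    qed
    have "Tm \<gamma> X = Tm \<gamma> (sum_list Ws ** X ** sum_list Ws)" by (simp add: Ws(3))
    also have "\<dots> = sum_list (map (\<lambda>W. Tm \<gamma> (W ** X ** W)) Ws)"
      by (rule T_sum[OF g pt]) (use Ws in auto)
    also have "\<dots> = sum_list (map (\<lambda>W. 0) Ws)"
      by (intro arg_cong[where f=sum_list] map_cong refl) (simp add: z del: comp_apply)
    finally show ?thesis by simp
  qed
  have "completely_reducible (Tm \<gamma>)"
    unfolding completely_reducible_def
  proof (intro conjI sa pos exI[of _ Ws] allI impI ballI)
    fix i assume i: "i < length Ws"
    show "orth_proj (Ws ! i)" using Ws(1) nth[OF i] by blast
    show "Tm \<gamma> ` corner (Ws ! i) (Ws ! i) \<subseteq> corner (Ws ! i) (Ws ! i)"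
      using Ws(1) nth[OF i] invar_def by blast
    show "irreducible_on (Tm \<gamma>) (Ws ! i)" using Ws(1) nth[OF i] by blast
  next
    fix i j assume "i < length Ws" "j < length Ws" "i \<noteq> j"
    thus "Ws ! i ** Ws ! j = 0" by (rule pw)
  next
    fix X assume "X \<in> orth_compl (corner_sum Ws)"
    thus "Tm \<gamma> X = 0" by (rule kill)
  qed
  thus ?thesis using g unfolding CR_def by blast
qed


end
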